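(* The formal series $\mathbb F_1,\mathbb F_4$ satisfy $$\mathbb P(\mathbb F_1)-\mathbb Q(\mathbb F_4)=1,\qquad -\mathbb Q(\mathbb F_1)+\mathbb P(\mathbb F_4)=XY.$$
   Context: Let $\Gamma_{k,r}(d,j)$ ($k,r,d\in\mathbb N$, $j\in\{1,2,3,4\}$) be defined as follows. On the $2$-regular Bethe lattice $\mathcal B$ (infinite tree with all nodes of degree $3$, edges of length $1$, $m(B)$ midpoint of edge $B$), a path of length $k\ge1$ from oriented edge $\vec A$ to $\vec B$ is a tuple $(\vec C_0=\vec A,\dots,\vec C_k=\vec B)$ with the terminal node of $\vec C_i$ equal to the initial node of $\vec C_{i+1}$; an inversion is an $i$ with $\vec C_{i+1}=-\vec C_i$. For a pair $(\vec A,\vec B)$ at distance $d=\mathrm{dist}(m(A),m(B))\ge1$: $\vec A$ points toward $B$ if its terminal node is on the geodesic from $m(A)$ to $m(B)$, $\vec B$ points away from $A$ if its initial node is on it; type 1: ($\vec A$ toward, $\vec B$ away), type 2: (toward, toward $A$), type 3: (away from $B$, toward $A$), type 4: (away, away). For $d=0$, types 1,3 mean $\vec B=\vec A$ and types 2,4 mean $\vec B=-\vec A$. For $k\ge1$, $\Gamma_{k,r}(d,j)$ is the number of paths of length $k$ with $r$ inversions from $\vec A$ to $\vec B$ for a pair of type $j$ at distance $d$; for $k=0$, $\Gamma_{0,0}(0,1)=\Gamma_{0,0}(0,3)=1$ and $\Gamma_{0,r}(d,j)=0$ otherwise. Define formal power series $\mathbb F_j=\sum_{k,r,d\ge0}\Gamma_{k,r}(d,j)X^kY^rZ^d$.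 On formal series in $X,Y,Z$ let $\Theta(F)=F-\frac{2X}{Z}(F-F_{|Z=0})$; $\Theta$ is invertible: if $\Theta(F)=\sum_nG_n(X,Y)Z^n$ then $F=\sum_nF_nZ^n$ with $F_n=\sum_{p\ge0}(2X)^pG_{n+p}$. Define $\mathbb P(F)=F-XZF-X^2(Y^2+Y)\Theta^{-1}(F)+X^2Y\,\Theta^{-1}(F)_{|Z=0}$ and $\mathbb Q(F)=2X^2Y\,\partial_Z\Theta^{-1}(F)_{|Z=0}$. *)

theory Defs
  imports Main
begin

text \<open>Concrete model: vertices are reduced words over {0,1,2} (no two consecutive
equal letters), i.e. elements of the free product Z2*Z2*Z2; the parent of a
nonempty word is its tail.\<close>

definition bvert :: "nat list \<Rightarrow> bool" where
  "bvert w \<longleftrightarrow> set w \<subseteq> {0,1,2} \<and> (\<forall>i. Suc i < length w \<longrightarrow> w ! i \<noteq> w ! Suc i)"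

definition badj :: "nat list \<Rightarrow> nat list \<Rightarrow> bool" where
  "badj u v \<longleftrightarrow> bvert u \<and> bvert v \<and> ((u \<noteq> [] \<and> v = tl u) \<or> (v \<noteq> [] \<and> u = tl v))"

type_synonym oedge = "nat list \<times> nat list"

text \<open>Oriented edge (initial node, terminal node).\<close>
definition is_oedge :: "oedge \<Rightarrow> bool" where
  "is_oedge A \<longleftrightarrow> badj (fst A) (snd A)"

definition rev_edge :: "oedge \<Rightarrow> oedge" where
  "rev_edge A = (snd A, fst A)"

definition vdist :: "nat list \<Rightarrow> nat list \<Rightarrow> nat" where
  "vdist u v = (LEAST n. \<exists>ws. length ws = Suc n \<and> hd ws = u \<and> last ws = v \<and>
                          (\<forall>i<n. badj (ws ! i) (ws ! Suc i)))"

text \<open>Distances in half-units (so that midpoints of edges have integral distances).\<close>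
definition hdist_vm :: "nat list \<Rightarrow> oedge \<Rightarrow> nat" where
  "hdist_vm x A = 2 * min (vdist x (fst A)) (vdist x (snd A)) + 1"

definition hdist_mm :: "oedge \<Rightarrow> oedge \<Rightarrow> nat" where
  "hdist_mm A B = (if {fst A, snd A} = {fst B, snd B} then 0
     else 2 * Min {vdist a b | a b. a \<in> {fst A, snd A} \<and> b \<in> {fst B, snd B}} + 2)"

definition edist :: "oedge \<Rightarrow> oedge \<Rightarrow> nat" where
  "edist A B = hdist_mm A B div 2"

text \<open>Node x lies on the geodesic from m(A) to m(B).\<close>
definition on_geod :: "nat list \<Rightarrow> oedge \<Rightarrow> oedge \<Rightarrow> bool" where
  "on_geod x A B \<longleftrightarrow> hdist_vm x A + hdist_vm x B = hdist_mm A B"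

definition pair_type :: "nat \<Rightarrow> nat \<Rightarrow> oedge \<Rightarrow> oedge \<Rightarrow> bool" where
  "pair_type j d A B \<longleftrightarrow> is_oedge A \<and> is_oedge B \<and>
     (if d = 0 then ((j = 1 \<or> j = 3) \<and> B = A) \<or> ((j = 2 \<or> j = 4) \<and> B = rev_edge A)
      else edist A B = d \<and>
        ((j = 1 \<and> on_geod (snd A) A B \<and> on_geod (fst B) A B) \<or>
         (j = 2 \<and> on_geod (snd A) A B \<and> on_geod (snd B) A B) \<or>
         (j = 3 \<and> on_geod (fst A) A B \<and> on_geod (snd B) A B) \<or>
         (j = 4 \<and> on_geod (fst A) A B \<and> on_geod (fst B) A B)))"

definition is_path :: "nat \<Rightarrow> oedge \<Rightarrow> oedge \<Rightarrow> oedge list \<Rightarrow> bool" where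
  "is_path k A B cs \<longleftrightarrow> length cs = Suc k \<and> cs ! 0 = A \<and> cs ! k = B \<and>
     (\<forall>i\<le>k. is_oedge (cs ! i)) \<and> (\<forall>i<k. snd (cs ! i) = fst (cs ! Suc i))"

definition inversions :: "nat \<Rightarrow> oedge list \<Rightarrow> nat" where
  "inversions k cs = card {i. i < k \<and> cs ! Suc i = rev_edge (cs ! i)}"

text \<open>Gamma_{k,r}(d,j), computed for a (chosen) pair of type j at distance d.\<close>
definition Gamma :: "nat \<Rightarrow> nat \<Rightarrow> nat \<Rightarrow> nat \<Rightarrow> nat" where
  "Gamma k r d j = (if k = 0 then (if r = 0 \<and> d = 0 \<and> (j = 1 \<or> j = 3) then 1 else 0)
     else (let AB = (SOME AB. pair_type j d (fst AB) (snd AB)) in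
           card {cs. is_path k (fst AB) (snd AB) cs \<and> inversions k cs = r}))"

text \<open>A series F is represented by F k r d = coefficient of X^k Y^r Z^d.\<close>
type_synonym ser = "nat \<Rightarrow> nat \<Rightarrow> nat \<Rightarrow> int"

definition FF :: "nat \<Rightarrow> ser" where
  "FF j = (\<lambda>k r d. int (Gamma k r d j))"

definition ser_add :: "ser \<Rightarrow> ser \<Rightarrow> ser" where
  "ser_add F G = (\<lambda>k r d. F k r d + G k r d)"

definition ser_sub :: "ser \<Rightarrow> ser \<Rightarrow> ser" where
  "ser_sub F G = (\<lambda>k r d. F k r d - G k r d)"

definition ser_neg :: "ser \<Rightarrow> ser" where
  "ser_neg F = (\<lambda>k r d. - F k r d)"

definition ser_smult :: "int \<Rightarrow> ser \<Rightarrow> ser" where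
  "ser_smult c F = (\<lambda>k r d. c * F k r d)"

definition ser_monom :: "nat \<Rightarrow> nat \<Rightarrow> nat \<Rightarrow> ser \<Rightarrow> ser" where
  "ser_monom a b c F = (\<lambda>k r d. if a \<le> k \<and> b \<le> r \<and> c \<le> d then F (k - a) (r - b) (d - c) else 0)"

definition ser_Z0 :: "ser \<Rightarrow> ser" where
  "ser_Z0 F = (\<lambda>k r d. if d = 0 then F k r 0 else 0)"

definition ser_divZ :: "ser \<Rightarrow> ser" where
  "ser_divZ F = (\<lambda>k r d. F k r (Suc d))"

definition ser_derivZ :: "ser \<Rightarrow> ser" where
  "ser_derivZ F = (\<lambda>k r d. int (Suc d) * F k r (Suc d))"

definition ser_one :: ser where
  "ser_one = (\<lambda>k r d. if k = 0 \<and> r = 0 \<and> d = 0 then 1 else 0)"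

definition Theta :: "ser \<Rightarrow> ser" where
  "Theta F = ser_sub F (ser_smult 2 (ser_monom 1 0 0 (ser_divZ (ser_sub F (ser_Z0 F)))))"

definition Theta_inv :: "ser \<Rightarrow> ser" where
  "Theta_inv G = (\<lambda>k r n. \<Sum>p\<le>k. 2 ^ p * G (k - p) r (n + p))"

definition PP :: "ser \<Rightarrow> ser" where
  "PP F = ser_add (ser_sub (ser_sub (ser_sub F (ser_monom 1 0 1 F))
            (ser_monom 2 2 0 (Theta_inv F))) (ser_monom 2 1 0 (Theta_inv F)))
          (ser_monom 2 1 0 (ser_Z0 (Theta_inv F)))"

definition QQ :: "ser \<Rightarrow> ser" where
  "QQ F = ser_smult 2 (ser_monom 2 1 0 (ser_Z0 (ser_derivZ (Theta_inv F))))"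

end

theory Submission
  imports Defs
begin

fun lcp :: "'a list \<Rightarrow> 'a list \<Rightarrow> nat" where
  "lcp (x#xs) (y#ys) = (if x = y then Suc (lcp xs ys) else 0)"
| "lcp _ _ = 0"

lemma lcp_sym: "lcp xs ys = lcp ys xs"
  by (induction xs ys rule: lcp.induct) auto

lemma lcp_le1: "lcp xs ys \<le> length xs"
  by (induction xs ys rule: lcp.induct) auto

lemma lcp_le2: "lcp xs ys \<le> length ys"
  by (induction xs ys rule: lcp.induct) auto

lemma lcp_refl[simp]: "lcp xs xs = length xs"
  by (induction xs) auto

lemma lcp_take: "lcp (take n xs) ys = min n (lcp xs ys)"
proof (induction xs ys arbitrary: n rule: lcp.induct)
  case (1 x xs y ys)
  then show ?case by (cases n) auto
qed auto

lemma lcp_full: "lcp xs ys = length xs \<Longrightarrow> take (length xs) ys = xs"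
  by (induction xs ys rule: lcp.induct) (auto split: if_splits)

lemma lcp_eq: "lcp xs ys = length xs \<Longrightarrow> lcp xs ys = length ys \<Longrightarrow> xs = ys"
  by (metis lcp_full take_all order_refl)

lemma lcp_snoc: "lcp (xs @ [c]) ys = (if lcp xs ys = length xs \<and> length xs < length ys \<and> ys ! length xs = c
   then Suc (length xs) else lcp xs ys)"
proof (induction xs arbitrary: ys)
  case Nil
  then show ?case by (cases ys) auto
next
  case (Cons a xs)
  then show ?case by (cases ys) auto
qed

definition D :: "nat list \<Rightarrow> nat list \<Rightarrow> nat" where
  "D u v = length u + length v - 2 * lcp (rev u) (rev v)"

lemma D_sym: "D u v = D v u"
  unfolding D_def by (simp add: lcp_sym)

lemma D_refl[simp]: "D u u = 0"
  unfolding D_def by simp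

lemma lcp_rev_le1: "lcp (rev u) (rev v) \<le> length u"
  using lcp_le1[of "rev u" "rev v"] by simp
lemma lcp_rev_le2: "lcp (rev u) (rev v) \<le> length v"
  using lcp_le2[of "rev u" "rev v"] by simp

lemma D_eq0: "D u v = 0 \<Longrightarrow> u = v"
proof -
  assume "D u v = 0"
  then have "lcp (rev u) (rev v) = length u" "lcp (rev u) (rev v) = length v"
    using lcp_rev_le1[of u v] lcp_rev_le2[of u v] unfolding D_def by auto
  then have "rev u = rev v" using lcp_eq[of "rev u" "rev v"] by simp
  then show ?thesis by simp
qed

lemma D_tl:
  assumes "v \<noteq> []"
  shows "D (tl v) a = (if lcp (rev v) (rev a) = length v then D v a + 1 else D v a - 1)
     \<and> (lcp (rev v) (rev a) \<noteq> length v \<longrightarrow> D v a \<ge> 1)"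
proof -
  have r: "rev (tl v) = take (length v - 1) (rev v)"
    using assms by (simp add: butlast_rev[symmetric] butlast_conv_take)  
  have "lcp (rev (tl v)) (rev a) = min (length v - 1) (lcp (rev v) (rev a))"
    unfolding r lcp_take by simp
  then show ?thesis using lcp_rev_le1[of v a] lcp_rev_le2[of v a] assms
    unfolding D_def by (cases v) auto
qed

lemma D_cons:
  "D (c # v) a = (if lcp (rev v) (rev a) = length v \<and> length v < length a \<and> rev a ! length v = c
     then D v a - 1 else D v a + 1)
   \<and> (lcp (rev v) (rev a) = length v \<and> length v < length a \<longrightarrow> D v a \<ge> 1)"
  using lcp_rev_le1[of v a] lcp_rev_le2[of v a]
  unfolding D_def by (auto simp: lcp_snoc)

lemma D_par: "even (D u v + length u + length v)"
  unfolding D_def using lcp_rev_le1[of u v] lcp_rev_le2[of u v] by auto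


lemma bvert_Nil[simp]: "bvert []"
  unfolding bvert_def by simp

lemma bvert_Cons: "bvert (c # v) \<longleftrightarrow> c \<le> 2 \<and> bvert v \<and> (v = [] \<or> c \<noteq> hd v)"
proof
  assume h: "bvert (c # v)"
  have 1: "c \<le> 2" using h unfolding bvert_def by auto
  have 2: "set v \<subseteq> {0,1,2}" using h unfolding bvert_def by auto
  have 3: "\<forall>i. Suc i < length v \<longrightarrow> v ! i \<noteq> v ! Suc i"
  proof (intro allI impI)
    fix i assume "Suc i < length v"
    then have "Suc (Suc i) < length (c # v)" by simp
    then show "v ! i \<noteq> v ! Suc i" using h unfolding bvert_def by (metis nth_Cons_Suc)
  qed
  have 4: "v = [] \<or> c \<noteq> hd v"
  proof (cases v)
    case (Cons a list)
    then have "Suc 0 < length (c # v)" by simp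
    then have "(c#v) ! 0 \<noteq> (c#v) ! Suc 0" using h unfolding bvert_def by blast
    then show ?thesis using Cons by simp
  qed simp
  show "c \<le> 2 \<and> bvert v \<and> (v = [] \<or> c \<noteq> hd v)" using 1 2 3 4 unfolding bvert_def by simp
next
  assume h: "c \<le> 2 \<and> bvert v \<and> (v = [] \<or> c \<noteq> hd v)"
  have "set (c # v) \<subseteq> {0,1,2}" using h unfolding bvert_def by auto
  moreover have "\<forall>i. Suc i < length (c # v) \<longrightarrow> (c # v) ! i \<noteq> (c # v) ! Suc i"
  proof (intro allI impI)
    fix i assume i: "Suc i < length (c # v)"
    show "(c # v) ! i \<noteq> (c # v) ! Suc i"
    proof (cases i)
      case 0
      then show ?thesis using h i by (cases v) auto
    next
      case (Suc j)
      then show ?thesis using h i unfolding bvert_def by auto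
    qed
  qed
  ultimately show "bvert (c # v)" unfolding bvert_def by simp
qed

lemma bvert_tl: "bvert v \<Longrightarrow> bvert (tl v)"
  by (cases v) (auto simp: bvert_Cons)

definition nbr :: "nat list \<Rightarrow> nat list set" where
  "nbr v = {w. badj w v}"

lemma badj_sym: "badj u v = badj v u"
  unfolding badj_def by auto

lemma badj_len: "badj u v \<Longrightarrow> length v \<le> Suc (length u)"
  unfolding badj_def by auto

lemma D_adj: "badj w v \<Longrightarrow> D w a = D v a + 1 \<or> D v a = D w a + 1"
proof -
  assume "badj w v"
  then have "(w \<noteq> [] \<and> v = tl w) \<or> (v \<noteq> [] \<and> w = tl v)" unfolding badj_def by auto
  then show ?thesis
  proof
    assume h: "w \<noteq> [] \<and> v = tl w"
    then obtain c where w: "w = c # v" by (cases w) auto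
    show ?thesis using D_cons[of c v a] unfolding w by (auto split: if_splits)
  next
    assume h: "v \<noteq> [] \<and> w = tl v"
    show ?thesis using D_tl[of v a] h by (auto split: if_splits)
  qed
qed

lemma D_adj_le: "badj w v \<Longrightarrow> D w a \<le> D v a + 1"
  using D_adj[of w v a] by linarith

lemma bvert_suffix:
  assumes "bvert a" "take n (rev a) = rev v" "n \<le> length a"
  shows "bvert v"
proof -
  have "v = drop (length a - n) a" using assms
  proof -
    have "rev (drop (length a - n) a) = take n (rev a)" using assms(3) by (simp add: rev_drop)
    then have "rev (drop (length a - n) a) = rev v" using assms(2) by simp
    then show ?thesis by simp
  qed
  then show ?thesis using assms(1) unfolding bvert_def
    by (auto dest: in_set_dropD)
qed

lemma closer_ex:
  assumes "bvert v" "bvert a" "v \<noteq> a"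
  shows "\<exists>w. badj w v \<and> D w a + 1 = D v a"
proof (cases "lcp (rev v) (rev a) = length v")
  case True
  have tk: "take (length v) (rev a) = rev v" using lcp_full[of "rev v" "rev a"] True by simp
  have lt: "length v < length a"
  proof (rule ccontr)
    assume "\<not> length v < length a"
    then have "length v = length a" using lcp_rev_le2[of v a] True by simp
    then have "rev v = rev a" using tk by simp
    then show False using assms by simp
  qed
  define c where "c = rev a ! length v"
  have c2: "c \<le> 2" using assms(2) lt unfolding bvert_def
  proof -
    have "c \<in> set (rev a)" unfolding c_def using lt by (simp add: nth_mem del: set_rev)
    then have "c \<in> set a" by simp
    then show ?thesis using assms(2) unfolding bvert_def by auto
  qed
  have chd: "v = [] \<or> c \<noteq> hd v"
  proof (cases v)
    case (Cons x xs)
    have "hd v = last (rev v)" using Cons by simp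
    also have "\<dots> = rev v ! (length v - 1)" using Cons by (simp add: nth_append)
    also have "\<dots> = rev a ! (length v - 1)" using tk Cons by (metis diff_less length_greater_0_conv list.simps(3) nth_take zero_less_one)
    also have "\<dots> = a ! (length a - length v)" using lt Cons by (simp add: rev_nth)
    finally have h1: "hd v = a ! (length a - length v)" .
    have h2: "c = a ! (length a - Suc (length v))" unfolding c_def using lt by (simp add: rev_nth)
    have "Suc (length a - Suc (length v)) < length a" "Suc (length a - Suc (length v)) = length a - length v"
      using lt Cons by auto
    then have "a ! (length a - Suc (length v)) \<noteq> a ! (length a - length v)"
      using assms(2) unfolding bvert_def by metis
    then show ?thesis using h1 h2 by simp
  qed simp
  have bw: "bvert (c # v)" using c2 chd assms(1) by (simp add: bvert_Cons)
  have "badj (c # v) v" using bw assms(1) unfolding badj_def by simp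
  moreover have "D (c # v) a + 1 = D v a" using D_cons[of c v a] True lt c_def by auto
  ultimately show ?thesis by blast
next
  case False
  then have ne: "v \<noteq> []" by auto
  have "badj (tl v) v" using ne assms(1) bvert_tl unfolding badj_def by auto
  moreover have "D (tl v) a + 1 = D v a" using D_tl[OF ne, of a] False by auto
  ultimately show ?thesis by blast
qed

lemma closer_form:
  assumes "badj w v" "D w a < D v a"
  shows "(lcp (rev v) (rev a) = length v \<and> w = (rev a ! length v) # v) \<or>
         (lcp (rev v) (rev a) \<noteq> length v \<and> w = tl v)"
proof -
  from assms(1) have "(w \<noteq> [] \<and> v = tl w) \<or> (v \<noteq> [] \<and> w = tl v)" unfolding badj_def by auto
  then show ?thesis
  proof
    assume h: "w \<noteq> [] \<and> v = tl w"
    then obtain c where w: "w = c # v" by (cases w) auto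
    show ?thesis using D_cons[of c v a] assms(2) unfolding w by (auto split: if_splits)
  next
    assume h: "v \<noteq> [] \<and> w = tl v"
    show ?thesis using D_tl[of v a] h assms(2) by (auto split: if_splits)
  qed
qed

lemma closer_uniq:
  assumes "badj w1 v" "D w1 a < D v a" "badj w2 v" "D w2 a < D v a"
  shows "w1 = w2"
  using closer_form[OF assms(1,2)] closer_form[OF assms(3,4)] by auto


lemma t1: "badj w [] \<Longrightarrow> w \<noteq> [] \<and> tl w = [] \<and> bvert w" unfolding badj_def by auto
lemma t2: "w \<noteq> [] \<Longrightarrow> tl w = [] \<Longrightarrow> bvert w \<Longrightarrow> \<exists>c. w = [c] \<and> c \<le> 2" by (cases w) (auto simp: bvert_Cons)
lemma t3: "{[0],[1],[2]} \<subseteq> nbr []" unfolding nbr_def badj_def by (simp add: bvert_Cons)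
lemma nbr_Nil: "nbr [] = {[0],[1],[2]}"
proof
  show "nbr [] \<subseteq> {[0],[1],[2]}"
  proof
    fix w assume "w \<in> nbr []"
    then have "badj w []" unfolding nbr_def by simp
    then obtain c where c: "w = [c]" "c \<le> 2" using t1 t2 by blast
    then have "c = 0 \<or> c = 1 \<or> c = 2" by arith
    then show "w \<in> {[0],[1],[2]}" using c by auto
  qed
qed (rule t3)

lemma hd_cases: "(h::nat) \<le> 2 \<Longrightarrow> \<exists>c1 c2. c1 \<le> 2 \<and> c2 \<le> 2 \<and> c1 \<noteq> h \<and> c2 \<noteq> h \<and> c1 \<noteq> c2 \<and> (\<forall>c. c \<le> 2 \<longrightarrow> c \<noteq> h \<longrightarrow> c = c1 \<or> c = c2)"
proof -
  assume "h \<le> 2"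
  then consider "h = 0" | "h = 1" | "h = 2" by arith
  then show ?thesis
  proof cases
    case 1 then show ?thesis by (intro exI[of _ 1] exI[of _ 2]) auto
  next
    case 2 then show ?thesis by (intro exI[of _ 0] exI[of _ 2]) auto
  next
    case 3 then show ?thesis by (intro exI[of _ 0] exI[of _ 1]) auto
  qed
qed
lemma nbr_Cons:
  assumes "bvert (h # t)" "c1 \<le> 2" "c2 \<le> 2" "c1 \<noteq> h" "c2 \<noteq> h" "c1 \<noteq> c2"
    "\<forall>c. c \<le> 2 \<longrightarrow> c \<noteq> h \<longrightarrow> c = c1 \<or> c = c2"
  shows "nbr (h # t) = {t, c1 # h # t, c2 # h # t}"
proof
  show "nbr (h # t) \<subseteq> {t, c1 # h # t, c2 # h # t}"
  proof
    fix w assume "w \<in> nbr (h # t)"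
    then have b: "badj w (h # t)" unfolding nbr_def by simp
    then have "(w \<noteq> [] \<and> h # t = tl w) \<or> w = t" unfolding badj_def by auto
    then show "w \<in> {t, c1 # h # t, c2 # h # t}"
    proof
      assume "w \<noteq> [] \<and> h # t = tl w"
      then obtain c where w: "w = c # h # t" by (cases w) auto
      then have "c \<le> 2" "c \<noteq> h" using b unfolding badj_def by (auto simp: bvert_Cons)
      then have "c = c1 \<or> c = c2" using assms(7) by blast
      then show ?thesis using w by auto
    qed simp
  qed
next
  have bt: "bvert t" using assms(1) by (simp add: bvert_Cons)
  have "badj t (h # t)" using assms(1) bt unfolding badj_def by simp
  moreover have "badj (c1 # h # t) (h # t)" using assms unfolding badj_def by (simp add: bvert_Cons)
  moreover have "badj (c2 # h # t) (h # t)" using assms unfolding badj_def by (simp add: bvert_Cons)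
  ultimately show "{t, c1 # h # t, c2 # h # t} \<subseteq> nbr (h # t)" unfolding nbr_def by simp
qed

lemma nbr_finite_3:
  assumes "bvert v"
  shows "\<exists>x y z. distinct [x,y,z] \<and> nbr v = {x,y,z}"
proof (cases v)
  case Nil
  have e: "nbr v = {[0],[1],[2]}" using Nil nbr_Nil by simp
  show ?thesis by (rule exI[of _ "[0]"], rule exI[of _ "[1]"], rule exI[of _ "[2]"]) (simp add: e)
next
  case (Cons h t)
  have "h \<le> 2" using assms Cons by (simp add: bvert_Cons)
  then obtain c1 c2 where cs: "c1 \<le> 2" "c2 \<le> 2" "c1 \<noteq> h" "c2 \<noteq> h" "c1 \<noteq> c2"
    "\<forall>c. c \<le> 2 \<longrightarrow> c \<noteq> h \<longrightarrow> c = c1 \<or> c = c2" using hd_cases by blast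
  have "nbr v = {t, c1 # h # t, c2 # h # t}" using nbr_Cons[OF _ cs] assms Cons by simp
  moreover have "distinct [t, c1 # h # t, c2 # h # t]"
  proof -
    have "length t \<noteq> length (c1 # h # t)" "length t \<noteq> length (c2 # h # t)" by simp_all
    then have "t \<noteq> c1 # h # t" "t \<noteq> c2 # h # t" by metis+
    then show ?thesis using cs(5) by simp
  qed
  ultimately show ?thesis by (intro exI[of _ t] exI[of _ "c1 # h # t"] exI[of _ "c2 # h # t"]) simp
qed

lemma nbr_finite: "finite (nbr v)"
proof (cases "bvert v")
  case True
  then obtain x y z where "nbr v = {x,y,z}" using nbr_finite_3 by blast
  then show ?thesis by simp
next
  case False then have "nbr v = {}" unfolding nbr_def badj_def by auto
  then show ?thesis by simp
qed
lemma walk_lower: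
  "\<And>ws u. length ws = Suc n \<Longrightarrow> hd ws = u \<Longrightarrow> last ws = v \<Longrightarrow>
     (\<forall>i<n. badj (ws ! i) (ws ! Suc i)) \<Longrightarrow> D u v \<le> n"
proof (induction n)
  case 0
  then obtain x where "ws = [x]" by (cases ws) auto
  then show ?case using 0 by simp
next
  case (Suc n)
  then obtain x ws' where ws: "ws = x # ws'" by (cases ws) auto
  have l: "length ws' = Suc n" using Suc ws by simp
  then have ne: "ws' \<noteq> []" by auto
  have "D (hd ws') v \<le> n"
  proof (rule Suc.IH[OF l refl])
    show "last ws' = v" using Suc ws ne by simp
    show "\<forall>i<n. badj (ws' ! i) (ws' ! Suc i)" using Suc(5) ws by auto
  qed
  moreover have "badj u (hd ws')" using Suc(5) ws Suc(3) ne by (metis hd_conv_nth list.sel(1) nth_Cons_0 nth_Cons_Suc zero_less_Suc)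
  ultimately show ?case using D_adj_le[of u "hd ws'" v] by linarith
qed

lemma walk_ex:
  "\<And>u. bvert u \<Longrightarrow> bvert v \<Longrightarrow> D u v = n \<Longrightarrow> \<exists>ws. length ws = Suc n \<and> hd ws = u \<and> last ws = v \<and>
     (\<forall>i<n. badj (ws ! i) (ws ! Suc i))"
proof (induction n)
  case 0
  then have "u = v" using D_eq0 by simp
  then show ?case by (intro exI[of _ "[u]"]) simp
next
  case (Suc n)
  then have "u \<noteq> v" by auto
  then obtain w where w: "badj w u" "D w v + 1 = D u v" using closer_ex Suc by blast
  then have "bvert w" unfolding badj_def by simp
  then obtain ws where ws: "length ws = Suc n" "hd ws = w" "last ws = v" "\<forall>i<n. badj (ws ! i) (ws ! Suc i)"
    using Suc w by fastforce
  show ?case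
  proof (intro exI[of _ "u # ws"] conjI allI impI)
    show "length (u # ws) = Suc (Suc n)" using ws by simp
    show "hd (u # ws) = u" by simp
    show "last (u # ws) = v" using ws by auto
    fix i assume "i < Suc n"
    have ne: "ws \<noteq> []" using ws(1) by auto
    show "badj ((u # ws) ! i) ((u # ws) ! Suc i)"
    proof (cases i)
      case 0
      then show ?thesis using w(1) ws(2) ne badj_sym[of w u] by (simp add: hd_conv_nth)
    next
      case (Suc j)
      then show ?thesis using ws(4) \<open>i < Suc n\<close> by simp
    qed
  qed
qed

lemma vdist_D: "bvert u \<Longrightarrow> bvert v \<Longrightarrow> vdist u v = D u v"
  unfolding vdist_def
proof (rule Least_equality)
  assume "bvert u" "bvert v"
  then show "\<exists>ws. length ws = Suc (D u v) \<and> hd ws = u \<and> last ws = v \<and> (\<forall>i<D u v. badj (ws ! i) (ws ! Suc i))"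
    using walk_ex by blast
next
  fix y assume "\<exists>ws. length ws = Suc y \<and> hd ws = u \<and> last ws = v \<and> (\<forall>i<y. badj (ws ! i) (ws ! Suc i))"
  then show "D u v \<le> y" using walk_lower by blast
qed


lemma D_adj1: "badj p q \<Longrightarrow> D p q = 1"
  using D_adj[of p q q] by simp

lemma F1: "badj p q \<Longrightarrow> D x p = D x q + 1 \<or> D x q = D x p + 1"
  using D_adj[of p q x] D_sym[of x p] D_sym[of x q] by auto

lemma three_rot:
  assumes "distinct [x,y,z]" "w \<in> {x,y,z}"
  shows "\<exists>p q. distinct [w,p,q] \<and> {x,y,z} = {w,p,q}"
proof -
  have "w = x \<or> w = y \<or> w = z" using assms(2) by simp
  then show ?thesis
  proof (elim disjE)
    assume "w = x" then show ?thesis using assms(1) by (intro exI[of _ y] exI[of _ z]) simp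
  next
    assume "w = y" then show ?thesis using assms(1) by (intro exI[of _ x] exI[of _ z]) auto
  next
    assume "w = z" then show ?thesis using assms(1) by (intro exI[of _ x] exI[of _ y]) auto
  qed
qed

lemma nb_gen:
  assumes pq: "badj p q" and bv: "bvert v" and vp: "v \<noteq> p" and vq: "v \<noteq> q" and lt: "D v q < D v p"
  shows "\<exists>w0 x y. distinct [w0,x,y] \<and> nbr v = {w0,x,y} \<and> D w0 q + 1 = D v q \<and> D w0 p + 1 = D v p \<and>
     D x q = D v q + 1 \<and> D x p = D v p + 1 \<and> D y q = D v q + 1 \<and> D y p = D v p + 1"
proof -
  have bq: "bvert q" and bp: "bvert p" using pq unfolding badj_def by auto
  have f1v: "D v p = D v q + 1" using F1[OF pq, of v] lt by auto
  obtain w0 where w0: "badj w0 v" "D w0 q + 1 = D v q" using closer_ex[OF bv bq vq] by blast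
  have w0p: "D w0 p + 1 = D v p"
    using D_adj[OF w0(1), of p] F1[OF pq, of w0] w0(2) f1v by auto
  have oth: "D w q = D v q + 1 \<and> D w p = D v p + 1" if "w \<in> nbr v" "w \<noteq> w0" for w
  proof -
    have bw: "badj w v" using that unfolding nbr_def by simp
    have "\<not> D w q < D v q"
    proof
      assume "D w q < D v q"
      then have "w = w0" using closer_uniq[OF bw _ w0(1)] w0(2) by auto
      then show False using that by simp
    qed
    moreover have "\<not> D w p < D v p"
    proof
      assume "D w p < D v p"
      then have "w = w0" using closer_uniq[OF bw _ w0(1)] w0p by auto
      then show False using that by simp
    qed
    ultimately show ?thesis using D_adj[OF bw, of q] D_adj[OF bw, of p] by auto
  qed
  obtain x y z where xyz: "distinct [x,y,z]" "nbr v = {x,y,z}" using nbr_finite_3[OF bv] by blast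
  have "w0 \<in> {x,y,z}" using w0(1) xyz(2) unfolding nbr_def by auto
  then obtain a b where ab: "distinct [w0,a,b]" "{x,y,z} = {w0,a,b}" using three_rot[OF xyz(1)] by blast
  have "a \<in> nbr v" "b \<in> nbr v" using xyz(2) ab(2) by auto
  then have "D a q = D v q + 1 \<and> D a p = D v p + 1" "D b q = D v q + 1 \<and> D b p = D v p + 1"
    using oth ab(1) by auto
  then show ?thesis using ab xyz(2) w0(2) w0p by (intro exI[of _ w0] exI[of _ a] exI[of _ b]) simp
qed

lemma nb_end:
  assumes pq: "badj p q"
  shows "\<exists>x y. distinct [p,x,y] \<and> nbr q = {p,x,y} \<and> D x q = 1 \<and> D x p = 2 \<and> D y q = 1 \<and> D y p = 2"
proof -
  have bq: "bvert q" using pq unfolding badj_def by auto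
  have dqp: "D q p = 1" using D_adj1[OF pq] D_sym by simp
  have oth: "D w q = 1 \<and> D w p = 2" if "w \<in> nbr q" "w \<noteq> p" for w
  proof -
    have bw: "badj w q" using that unfolding nbr_def by simp
    have "D w p \<noteq> 0" using D_eq0 that(2) by blast
    then show ?thesis using D_adj[OF bw, of q] D_adj[OF bw, of p] dqp by auto
  qed
  obtain x y z where xyz: "distinct [x,y,z]" "nbr q = {x,y,z}" using nbr_finite_3[OF bq] by blast
  have "p \<in> {x,y,z}" using pq xyz(2) unfolding nbr_def by auto
  then obtain a b where ab: "distinct [p,a,b]" "{x,y,z} = {p,a,b}" using three_rot[OF xyz(1)] by blast
  have "a \<in> nbr q" "b \<in> nbr q" using xyz(2) ab(2) by auto
  then have "D a q = 1 \<and> D a p = 2" "D b q = 1 \<and> D b p = 2"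
    using oth ab(1) by auto
  then show ?thesis using ab xyz(2) by (intro exI[of _ a] exI[of _ b]) simp
qed

definition dl :: "oedge \<Rightarrow> nat list \<Rightarrow> nat" where
  "dl A x = min (D x (fst A)) (D x (snd A))"

definition sg :: "oedge \<Rightarrow> nat list \<Rightarrow> bool" where
  "sg A x \<longleftrightarrow> D x (snd A) < D x (fst A)"

lemma dl_sg_F1: "is_oedge A \<Longrightarrow> (sg A x \<and> D x (snd A) = dl A x \<and> D x (fst A) = dl A x + 1) \<or>
   (\<not> sg A x \<and> D x (fst A) = dl A x \<and> D x (snd A) = dl A x + 1)"
  using F1[of "fst A" "snd A" x] unfolding is_oedge_def dl_def sg_def by auto

lemma ends:
  assumes "is_oedge A"
  shows "dl A (fst A) = 0" "dl A (snd A) = 0" "sg A (snd A)" "\<not> sg A (fst A)"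
  using D_adj1[of "fst A" "snd A"] D_sym[of "fst A" "snd A"] assms
  unfolding is_oedge_def dl_def sg_def by auto

lemma dl0: "dl A x = 0 \<Longrightarrow> x = fst A \<or> x = snd A"
  unfolding dl_def using D_eq0 by (metis min_def)

lemma nbA_gen:
  assumes A: "is_oedge A" and bv: "bvert v" and v1: "v \<noteq> fst A" and v2: "v \<noteq> snd A"
  shows "\<exists>w0 x y. distinct [w0,x,y] \<and> nbr v = {w0,x,y} \<and> dl A w0 + 1 = dl A v \<and>
     dl A x = dl A v + 1 \<and> dl A y = dl A v + 1 \<and> sg A w0 = sg A v \<and> sg A x = sg A v \<and> sg A y = sg A v"
proof -
  have pq: "badj (fst A) (snd A)" using A unfolding is_oedge_def by simp
  show ?thesis
  proof (cases "sg A v")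
    case True
    then have "D v (snd A) < D v (fst A)" unfolding sg_def by simp
    from nb_gen[OF pq bv v1 v2 this] obtain w0 x y where
      h: "distinct [w0,x,y]" "nbr v = {w0,x,y}" "D w0 (snd A) + 1 = D v (snd A)" "D w0 (fst A) + 1 = D v (fst A)"
     "D x (snd A) = D v (snd A) + 1" "D x (fst A) = D v (fst A) + 1" "D y (snd A) = D v (snd A) + 1" "D y (fst A) = D v (fst A) + 1"
      by blast
    then show ?thesis unfolding dl_def sg_def by (intro exI[of _ w0] exI[of _ x] exI[of _ y]) auto
  next
    case False
    then have "D v (fst A) < D v (snd A)" using dl_sg_F1[OF A, of v] by auto
    from nb_gen[OF pq[unfolded badj_sym[of "fst A"]] bv v2 v1 this] obtain w0 x y where
      h: "distinct [w0,x,y]" "nbr v = {w0,x,y}" "D w0 (fst A) + 1 = D v (fst A)" "D w0 (snd A) + 1 = D v (snd A)"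
     "D x (fst A) = D v (fst A) + 1" "D x (snd A) = D v (snd A) + 1" "D y (fst A) = D v (fst A) + 1" "D y (snd A) = D v (snd A) + 1"
      by blast
    then show ?thesis unfolding dl_def sg_def by (intro exI[of _ w0] exI[of _ x] exI[of _ y]) auto
  qed
qed

lemma nbA_snd:
  assumes A: "is_oedge A"
  shows "\<exists>x y. distinct [fst A,x,y] \<and> nbr (snd A) = {fst A,x,y} \<and> dl A x = 1 \<and> dl A y = 1 \<and> sg A x \<and> sg A y"
proof -
  have pq: "badj (fst A) (snd A)" using A unfolding is_oedge_def by simp
  from nb_end[OF pq] obtain x y where h: "distinct [fst A,x,y]" "nbr (snd A) = {fst A,x,y}"
    "D x (snd A) = 1" "D x (fst A) = 2" "D y (snd A) = 1" "D y (fst A) = 2" by blast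
  then show ?thesis unfolding dl_def sg_def by (intro exI[of _ x] exI[of _ y]) auto
qed

lemma nbA_fst:
  assumes A: "is_oedge A"
  shows "\<exists>x y. distinct [snd A,x,y] \<and> nbr (fst A) = {snd A,x,y} \<and> dl A x = 1 \<and> dl A y = 1 \<and> \<not> sg A x \<and> \<not> sg A y"
proof -
  have pq: "badj (snd A) (fst A)" using A badj_sym unfolding is_oedge_def by simp
  from nb_end[OF pq] obtain x y where h: "distinct [snd A,x,y]" "nbr (fst A) = {snd A,x,y}"
    "D x (fst A) = 1" "D x (snd A) = 2" "D y (fst A) = 1" "D y (snd A) = 2" by blast
  then show ?thesis unfolding dl_def sg_def by (intro exI[of _ x] exI[of _ y]) auto
qed

lemma edge_props:
  assumes A: "is_oedge A" and B: "is_oedge B" and ne: "{fst A, snd A} \<noteq> {fst B, snd B}"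
  shows "sg A (snd B) = sg A (fst B) \<and> (dl A (snd B) = dl A (fst B) + 1 \<or> dl A (fst B) = dl A (snd B) + 1)"
proof -
  have b1: "snd B \<in> nbr (fst B)" using B badj_sym[of "snd B" "fst B"] unfolding is_oedge_def nbr_def by simp
  have bv: "bvert (fst B)" using B unfolding is_oedge_def badj_def by simp
  consider "fst B = fst A" | "fst B = snd A" | "fst B \<noteq> fst A \<and> fst B \<noteq> snd A" by blast
  then show ?thesis
  proof cases
    case 1
    obtain x y where h: "distinct [snd A,x,y]" "nbr (fst A) = {snd A,x,y}" "dl A x = 1" "dl A y = 1" "\<not> sg A x" "\<not> sg A y"
      using nbA_fst[OF A] by blast
    have "snd B \<noteq> snd A" using ne 1 by auto
    then have "snd B = x \<or> snd B = y" using b1 h(2) 1 by auto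
    then show ?thesis using h 1 ends[OF A] by auto
  next
    case 2
    obtain x y where h: "distinct [fst A,x,y]" "nbr (snd A) = {fst A,x,y}" "dl A x = 1" "dl A y = 1" "sg A x" "sg A y"
      using nbA_snd[OF A] by blast
    have "snd B \<noteq> fst A" using ne 2 by auto
    then have "snd B = x \<or> snd B = y" using b1 h(2) 2 by auto
    then show ?thesis using h 2 ends[OF A] by auto
  next
    case 3
    obtain w0 x y where h: "distinct [w0,x,y]" "nbr (fst B) = {w0,x,y}" "dl A w0 + 1 = dl A (fst B)"
      "dl A x = dl A (fst B) + 1" "dl A y = dl A (fst B) + 1" "sg A w0 = sg A (fst B)" "sg A x = sg A (fst B)" "sg A y = sg A (fst B)"
      using nbA_gen[OF A bv] 3 by blast
    have "snd B = w0 \<or> snd B = x \<or> snd B = y" using b1 h(2) by auto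
    then show ?thesis using h by auto
  qed
qed


lemma oedge_bv: "is_oedge A \<Longrightarrow> bvert (fst A) \<and> bvert (snd A)"
  unfolding is_oedge_def badj_def by simp

lemma hvm: "bvert x \<Longrightarrow> is_oedge A \<Longrightarrow> hdist_vm x A = 2 * dl A x + 1"
  unfolding hdist_vm_def dl_def using oedge_bv[of A] vdist_D by simp

lemma set4: "{f a b | a b. a \<in> {p,q} \<and> b \<in> {r,s}} = {f p r, f p s, f q r, f q s}"
  by blast

lemma hmm_ne:
  assumes A: "is_oedge A" and B: "is_oedge B" and ne: "{fst A, snd A} \<noteq> {fst B, snd B}"
  shows "hdist_mm A B = 2 * min (dl A (fst B)) (dl A (snd B)) + 2"
proof -
  have bv: "bvert (fst A)" "bvert (snd A)" "bvert (fst B)" "bvert (snd B)" using oedge_bv A B by auto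
  have "{vdist a b | a b. a \<in> {fst A, snd A} \<and> b \<in> {fst B, snd B}} =
     {D (fst B) (fst A), D (fst B) (snd A), D (snd B) (fst A), D (snd B) (snd A)}"
    unfolding set4 using bv by (simp add: vdist_D D_sym insert_commute)
  then have "Min {vdist a b | a b. a \<in> {fst A, snd A} \<and> b \<in> {fst B, snd B}} = min (dl A (fst B)) (dl A (snd B))"
    unfolding dl_def by (simp add: min.assoc)
  then show ?thesis unfolding hdist_mm_def using ne by simp
qed

lemma edist_ne:
  assumes A: "is_oedge A" and B: "is_oedge B" and ne: "{fst A, snd A} \<noteq> {fst B, snd B}"
  shows "edist A B = Suc (min (dl A (fst B)) (dl A (snd B)))"
  unfolding edist_def hmm_ne[OF assms] by simp

lemma og_b:
  assumes A: "is_oedge A" and B: "is_oedge B" and ne: "{fst A, snd A} \<noteq> {fst B, snd B}"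
  shows "on_geod (fst B) A B \<longleftrightarrow> dl A (fst B) \<le> dl A (snd B)"
    "on_geod (snd B) A B \<longleftrightarrow> dl A (snd B) \<le> dl A (fst B)"
proof -
  have bv: "bvert (fst B)" "bvert (snd B)" using oedge_bv B by auto
  show "on_geod (fst B) A B \<longleftrightarrow> dl A (fst B) \<le> dl A (snd B)"
    unfolding on_geod_def hmm_ne[OF assms] hvm[OF bv(1) A] hvm[OF bv(1) B] ends[OF B] by auto
  show "on_geod (snd B) A B \<longleftrightarrow> dl A (snd B) \<le> dl A (fst B)"
    unfolding on_geod_def hmm_ne[OF assms] hvm[OF bv(2) A] hvm[OF bv(2) B] ends[OF B] by auto
qed

lemma og_a:
  assumes A: "is_oedge A" and B: "is_oedge B" and ne: "{fst A, snd A} \<noteq> {fst B, snd B}"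
  shows "on_geod (snd A) A B \<longleftrightarrow> sg A (fst B)"
    "on_geod (fst A) A B \<longleftrightarrow> \<not> sg A (fst B)"
proof -
  have bv: "bvert (fst A)" "bvert (snd A)" using oedge_bv A by auto
  have ep: "sg A (snd B) = sg A (fst B)" using edge_props[OF assms] by simp
  have f0: "(sg A (fst B) \<and> D (fst B) (snd A) = dl A (fst B) \<and> D (fst B) (fst A) = dl A (fst B) + 1) \<or>
   (\<not> sg A (fst B) \<and> D (fst B) (fst A) = dl A (fst B) \<and> D (fst B) (snd A) = dl A (fst B) + 1)"
    using dl_sg_F1[OF A] by blast
  have f1: "(sg A (snd B) \<and> D (snd B) (snd A) = dl A (snd B) \<and> D (snd B) (fst A) = dl A (snd B) + 1) \<or>
   (\<not> sg A (snd B) \<and> D (snd B) (fst A) = dl A (snd B) \<and> D (snd B) (snd A) = dl A (snd B) + 1)"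
    using dl_sg_F1[OF A] by blast
  have e1: "dl B (snd A) = min (D (fst B) (snd A)) (D (snd B) (snd A))"
    and e2: "dl B (fst A) = min (D (fst B) (fst A)) (D (snd B) (fst A))"
    unfolding dl_def using D_sym by auto
  have g1: "on_geod (snd A) A B \<longleftrightarrow> dl B (snd A) = min (dl A (fst B)) (dl A (snd B))"
    unfolding on_geod_def hmm_ne[OF assms] hvm[OF bv(2) A] hvm[OF bv(2) B] ends[OF A] by simp
  have g2: "on_geod (fst A) A B \<longleftrightarrow> dl B (fst A) = min (dl A (fst B)) (dl A (snd B))"
    unfolding on_geod_def hmm_ne[OF assms] hvm[OF bv(1) A] hvm[OF bv(1) B] ends[OF A] by simp
  have mp: "min (x + 1) (y + 1) = min x y + (1::nat)" for x y by simp
  show "on_geod (snd A) A B \<longleftrightarrow> sg A (fst B)" "on_geod (fst A) A B \<longleftrightarrow> \<not> sg A (fst B)"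
  proof -
    show "on_geod (snd A) A B \<longleftrightarrow> sg A (fst B)"
    proof (cases "sg A (fst B)")
      case True
      then show ?thesis using f0 f1 ep unfolding g1 e1 by simp
    next
      case False
      then have "D (fst B) (snd A) = dl A (fst B) + 1" "D (snd B) (snd A) = dl A (snd B) + 1"
        using f0 f1 ep by auto
      then show ?thesis using False unfolding g1 e1 mp by simp
    qed
    show "on_geod (fst A) A B \<longleftrightarrow> \<not> sg A (fst B)"
    proof (cases "sg A (fst B)")
      case True
      then have "D (fst B) (fst A) = dl A (fst B) + 1" "D (snd B) (fst A) = dl A (snd B) + 1"
        using f0 f1 ep by auto
      then show ?thesis using True unfolding g2 e2 mp by simp
    next
      case False
      then show ?thesis using f0 f1 ep unfolding g2 e2 by simp
    qed
  qed
qed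

lemma pt_gen:
  assumes A: "is_oedge A" and B: "is_oedge B" and ne: "{fst A, snd A} \<noteq> {fst B, snd B}"
  shows "pair_type j d A B \<longleftrightarrow> d = Suc (min (dl A (fst B)) (dl A (snd B))) \<and>
    ((j = 1 \<and> sg A (fst B) \<and> dl A (fst B) < dl A (snd B)) \<or>
     (j = 2 \<and> sg A (fst B) \<and> dl A (snd B) < dl A (fst B)) \<or>
     (j = 3 \<and> \<not> sg A (fst B) \<and> dl A (snd B) < dl A (fst B)) \<or>
     (j = 4 \<and> \<not> sg A (fst B) \<and> dl A (fst B) < dl A (snd B)))"
proof -
  have neq: "dl A (fst B) \<noteq> dl A (snd B)" using edge_props[OF assms] by auto
  have "B \<noteq> A" "B \<noteq> rev_edge A" using ne unfolding rev_edge_def by auto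
  moreover have "dl A (fst B) \<le> dl A (snd B) \<longleftrightarrow> dl A (fst B) < dl A (snd B)"
    "dl A (snd B) \<le> dl A (fst B) \<longleftrightarrow> dl A (snd B) < dl A (fst B)" using neq by auto
  ultimately show ?thesis unfolding pair_type_def
    by (simp only: A B edist_ne[OF assms] og_a[OF assms] og_b[OF assms] simp_thms if_False) auto
qed

lemma badj_len_neq: "badj u v \<Longrightarrow> length u \<noteq> length v"
proof -
  assume "badj u v"
  then have "(u \<noteq> [] \<and> v = tl u) \<or> (v \<noteq> [] \<and> u = tl v)" unfolding badj_def by blast
  then show ?thesis
  proof
    assume h: "u \<noteq> [] \<and> v = tl u"
    then have "length v = length u - 1" by simp
    moreover have "length u > 0" using h by simp
    ultimately show ?thesis by arith
  next
    assume h: "v \<noteq> [] \<and> u = tl v"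
    then have "length u = length v - 1" by simp
    moreover have "length v > 0" using h by simp
    ultimately show ?thesis by arith
  qed
qed

lemma oedge_neq: "is_oedge A \<Longrightarrow> fst A \<noteq> snd A"
  unfolding is_oedge_def using badj_len_neq by metis

lemma pt_A: "is_oedge A \<Longrightarrow> pair_type j d A A \<longleftrightarrow> d = 0 \<and> (j = 1 \<or> j = 3)"
proof -
  assume A: "is_oedge A"
  have "fst A \<noteq> snd A" using oedge_neq[OF A] .
  then have "A \<noteq> rev_edge A" unfolding rev_edge_def by (cases A) auto
  moreover have "edist A A = 0" unfolding edist_def hdist_mm_def by simp
  ultimately show ?thesis unfolding pair_type_def using A by auto
qed

lemma is_oedge_rev: "is_oedge A \<Longrightarrow> is_oedge (rev_edge A)"
  unfolding is_oedge_def rev_edge_def using badj_sym by simp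

lemma pt_revA: "is_oedge A \<Longrightarrow> pair_type j d A (rev_edge A) \<longleftrightarrow> d = 0 \<and> (j = 2 \<or> j = 4)"
proof -
  assume A: "is_oedge A"
  have "fst A \<noteq> snd A" using oedge_neq[OF A] .
  then have "A \<noteq> rev_edge A" unfolding rev_edge_def by (cases A) auto
  moreover have "edist A (rev_edge A) = 0" unfolding edist_def hdist_mm_def rev_edge_def by auto
  ultimately show ?thesis unfolding pair_type_def using A is_oedge_rev[OF A] by auto
qed


lemma inv_snoc:
  assumes len: "length cs = Suc k"
  shows "inversions (Suc k) (cs @ [B]) = inversions k cs + (if B = rev_edge (cs ! k) then 1 else 0)"
proof -
  have "{i. i < Suc k \<and> (cs @ [B]) ! Suc i = rev_edge ((cs @ [B]) ! i)} =
        {i. i < k \<and> cs ! Suc i = rev_edge (cs ! i)} \<union> (if B = rev_edge (cs ! k) then {k} else {})"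
  proof (rule set_eqI)
    fix i
    show "i \<in> {i. i < Suc k \<and> (cs @ [B]) ! Suc i = rev_edge ((cs @ [B]) ! i)} \<longleftrightarrow>
          i \<in> {i. i < k \<and> cs ! Suc i = rev_edge (cs ! i)} \<union> (if B = rev_edge (cs ! k) then {k} else {})"
    proof (cases "i < k")
      case True
      then show ?thesis using len by (simp add: nth_append)
    next
      case False
      then show ?thesis using len by (cases "i = k") (auto simp: nth_append)
    qed
  qed
  moreover have "finite {i. i < k \<and> cs ! Suc i = rev_edge (cs ! i)}" by simp
  moreover have "k \<notin> {i. i < k \<and> cs ! Suc i = rev_edge (cs ! i)}" by simp
  ultimately show ?thesis unfolding inversions_def by simp
qed

lemma path0: "is_path 0 A C cs \<longleftrightarrow> cs = [A] \<and> C = A \<and> is_oedge A"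
proof
  assume h: "is_path 0 A C cs"
  then have "length cs = 1" "cs ! 0 = A" "cs ! 0 = C" "is_oedge (cs ! 0)" unfolding is_path_def by auto
  then show "cs = [A] \<and> C = A \<and> is_oedge A" by (cases cs) auto
next
  assume "cs = [A] \<and> C = A \<and> is_oedge A"
  then show "is_path 0 A C cs" unfolding is_path_def by simp
qed

lemma path_snoc_iff:
  "is_path (Suc k) A B xs \<longleftrightarrow> (\<exists>cs w. xs = cs @ [B] \<and> is_path k A (w, fst B) cs \<and> is_oedge B \<and> w \<in> nbr (fst B))"
proof
  assume h: "is_path (Suc k) A B xs"
  then have len: "length xs = Suc (Suc k)" unfolding is_path_def by simp
  define cs where "cs = take (Suc k) xs"
  define w where "w = fst (xs ! k)"
  have xs: "xs = cs @ [B]"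
  proof -
    have "xs = take (Suc (Suc k)) xs" using len by simp
    also have "\<dots> = take (Suc k) xs @ [xs ! Suc k]" by (rule take_Suc_conv_app_nth) (simp add: len)
    finally have "xs = take (Suc k) xs @ [xs ! Suc k]" .
    then show ?thesis using h unfolding cs_def is_path_def by simp
  qed
  have lc: "length cs = Suc k" using len unfolding cs_def by simp
  have nth: "\<And>i. i \<le> k \<Longrightarrow> cs ! i = xs ! i" unfolding cs_def by simp
  have ck: "xs ! k = (w, fst B)"
    using h unfolding is_path_def w_def by (metis lessI prod.collapse)
  have ob: "is_oedge B" using h unfolding is_path_def by auto
  have "is_oedge (xs ! k)" using h unfolding is_path_def by simp
  then have wn: "w \<in> nbr (fst B)" using ck unfolding is_oedge_def nbr_def by simp
  have "is_path k A (w, fst B) cs" unfolding is_path_def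
  proof (intro conjI allI impI)
    show "length cs = Suc k" by (rule lc)
    show "cs ! 0 = A" using h nth[of 0] unfolding is_path_def by simp
    show "cs ! k = (w, fst B)" using nth[of k] ck by simp
    fix i
    show "i \<le> k \<Longrightarrow> is_oedge (cs ! i)" using h nth[of i] unfolding is_path_def by simp
    show "i < k \<Longrightarrow> snd (cs ! i) = fst (cs ! Suc i)" using h nth[of i] nth[of "Suc i"] unfolding is_path_def by simp
  qed
  then show "\<exists>cs w. xs = cs @ [B] \<and> is_path k A (w, fst B) cs \<and> is_oedge B \<and> w \<in> nbr (fst B)"
    using xs ob wn by blast
next
  assume "\<exists>cs w. xs = cs @ [B] \<and> is_path k A (w, fst B) cs \<and> is_oedge B \<and> w \<in> nbr (fst B)"
  then obtain cs w where h: "xs = cs @ [B]" "is_path k A (w, fst B) cs" "is_oedge B" "w \<in> nbr (fst B)" by blast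
  have lc: "length cs = Suc k" using h(2) unfolding is_path_def by simp
  show "is_path (Suc k) A B xs" unfolding is_path_def
  proof (intro conjI allI impI)
    show "length xs = Suc (Suc k)" using h(1) lc by simp
    show "xs ! 0 = A" using h(1,2) lc unfolding is_path_def by (simp add: nth_append)
    show "xs ! Suc k = B" using h(1) lc by (simp add: nth_append)
    fix i
    show "i \<le> Suc k \<Longrightarrow> is_oedge (xs ! i)"
    proof -
      assume "i \<le> Suc k"
      then consider "i \<le> k" | "i = Suc k" by linarith
      then show ?thesis
      proof cases
        case 1 then show ?thesis using h lc unfolding is_path_def by (simp add: nth_append)
      next
        case 2 then show ?thesis using h lc by (simp add: nth_append)
      qed
    qed
    show "i < Suc k \<Longrightarrow> snd (xs ! i) = fst (xs ! Suc i)"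
    proof -
      assume "i < Suc k"
      then consider "i < k" | "i = k" by linarith
      then show ?thesis
      proof cases
        case 1 then show ?thesis using h lc unfolding is_path_def by (simp add: nth_append)
      next
        case 2 then show ?thesis using h lc unfolding is_path_def by (simp add: nth_append)
      qed
    qed
  qed
qed

lemma paths_finite: "finite {cs. is_path k A C cs}"
proof (induction k arbitrary: C)
  case 0
  have "{cs. is_path 0 A C cs} \<subseteq> {[A]}" using path0 by auto
  then show ?case using finite_subset by blast
next
  case (Suc k)
  have "{cs. is_path (Suc k) A C cs} \<subseteq> (\<Union>w\<in>nbr (fst C). (\<lambda>cs. cs @ [C]) ` {cs. is_path k A (w, fst C) cs})"
  proof
    fix xs assume "xs \<in> {cs. is_path (Suc k) A C cs}"
    then have "is_path (Suc k) A C xs" by simp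
    then obtain cs w where h: "xs = cs @ [C]" "is_path k A (w, fst C) cs" "w \<in> nbr (fst C)"
      using path_snoc_iff[THEN iffD1] by blast
    then show "xs \<in> (\<Union>w\<in>nbr (fst C). (\<lambda>cs. cs @ [C]) ` {cs. is_path k A (w, fst C) cs})" by blast
  qed
  moreover have "finite (\<Union>w\<in>nbr (fst C). (\<lambda>cs. cs @ [C]) ` {cs. is_path k A (w, fst C) cs})"
    using nbr_finite Suc.IH by blast
  ultimately show ?case using finite_subset by blast
qed

definition cnt :: "nat \<Rightarrow> oedge \<Rightarrow> oedge \<Rightarrow> nat \<Rightarrow> nat" where
  "cnt k A B r = card {cs. is_path k A B cs \<and> inversions k cs = r}"

lemma cnt_Suc:
  assumes B: "is_oedge B"
  shows "cnt (Suc k) A B r = (\<Sum>w\<in>nbr (fst B).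
     (if w = snd B then (if r = 0 then 0 else cnt k A (w, fst B) (r - 1)) else cnt k A (w, fst B) r))"
proof -
  define S where "S w = {cs. is_path k A (w, fst B) cs \<and> inversions k cs + (if w = snd B then 1 else 0) = r}" for w
  have eq: "{cs. is_path (Suc k) A B cs \<and> inversions (Suc k) cs = r} = (\<Union>w\<in>nbr (fst B). (\<lambda>cs. cs @ [B]) ` S w)"
  proof (rule set_eqI)
    fix xs
    show "xs \<in> {cs. is_path (Suc k) A B cs \<and> inversions (Suc k) cs = r} \<longleftrightarrow> xs \<in> (\<Union>w\<in>nbr (fst B). (\<lambda>cs. cs @ [B]) ` S w)"
    proof
      assume "xs \<in> {cs. is_path (Suc k) A B cs \<and> inversions (Suc k) cs = r}"
      then have h1: "is_path (Suc k) A B xs" "inversions (Suc k) xs = r" by auto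
      then obtain cs w where h: "xs = cs @ [B]" "is_path k A (w, fst B) cs" "w \<in> nbr (fst B)"
        using path_snoc_iff[THEN iffD1] by blast
      have lc: "length cs = Suc k" "cs ! k = (w, fst B)" using h(2) unfolding is_path_def by auto
      have "(B = rev_edge (cs ! k)) = (w = snd B)" using lc(2) unfolding rev_edge_def by (cases B) auto
      then have "inversions k cs + (if w = snd B then 1 else 0) = r"
        using inv_snoc[OF lc(1), of B] h1(2) h(1) by simp
      then show "xs \<in> (\<Union>w\<in>nbr (fst B). (\<lambda>cs. cs @ [B]) ` S w)" using h unfolding S_def by blast
    next
      assume "xs \<in> (\<Union>w\<in>nbr (fst B). (\<lambda>cs. cs @ [B]) ` S w)"
      then obtain w cs where h: "w \<in> nbr (fst B)" "xs = cs @ [B]" "is_path k A (w, fst B) cs"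
        "inversions k cs + (if w = snd B then 1 else 0) = r" unfolding S_def by blast
      have lc: "length cs = Suc k" "cs ! k = (w, fst B)" using h(3) unfolding is_path_def by auto
      have "(B = rev_edge (cs ! k)) = (w = snd B)" using lc(2) unfolding rev_edge_def by (cases B) auto
      then have "inversions (Suc k) xs = r" using inv_snoc[OF lc(1), of B] h by simp
      moreover have "is_path (Suc k) A B xs" using path_snoc_iff[THEN iffD2] h B by blast
      ultimately show "xs \<in> {cs. is_path (Suc k) A B cs \<and> inversions (Suc k) cs = r}" by simp
    qed
  qed
  have fin: "finite (S w)" for w
    using paths_finite[of k A "(w, fst B)"] unfolding S_def by (rule finite_subset[rotated]) auto
  have inj: "inj_on (\<lambda>cs. cs @ [B]) (S w)" for w by (rule inj_onI) simp
  have disj: "(\<lambda>cs. cs @ [B]) ` S w1 \<inter> (\<lambda>cs. cs @ [B]) ` S w2 = {}" if "w1 \<noteq> w2" for w1 w2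
  proof (rule ccontr)
    assume "(\<lambda>cs. cs @ [B]) ` S w1 \<inter> (\<lambda>cs. cs @ [B]) ` S w2 \<noteq> {}"
    then obtain c1 c2 where "c1 \<in> S w1" "c2 \<in> S w2" "c1 @ [B] = c2 @ [B]" by blast
    then have "c1 = c2" "c1 ! k = (w1, fst B)" "c2 ! k = (w2, fst B)" unfolding S_def is_path_def by auto
    then show False using that by simp
  qed
  have "cnt (Suc k) A B r = (\<Sum>w\<in>nbr (fst B). card ((\<lambda>cs. cs @ [B]) ` S w))"
    unfolding cnt_def eq
    by (rule card_UN_disjoint) (use nbr_finite fin disj in auto)
  also have "\<dots> = (\<Sum>w\<in>nbr (fst B). card (S w))"
    using card_image[OF inj] by simp
  also have "\<dots> = (\<Sum>w\<in>nbr (fst B).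
     (if w = snd B then (if r = 0 then 0 else cnt k A (w, fst B) (r - 1)) else cnt k A (w, fst B) r))"
  proof (rule sum.cong[OF refl])
    fix w
    show "card (S w) = (if w = snd B then (if r = 0 then 0 else cnt k A (w, fst B) (r - 1)) else cnt k A (w, fst B) r)"
    proof (cases "w = snd B")
      case True
      then show ?thesis unfolding S_def cnt_def
        by (cases r) simp_all
    next
      case False
      then show ?thesis unfolding S_def cnt_def by simp
    qed
  qed
  finally show ?thesis .
qed


fun g :: "nat \<Rightarrow> nat \<Rightarrow> nat \<Rightarrow> nat \<Rightarrow> nat" where
  "g 0 r d j = (if r = 0 \<and> d = 0 \<and> (j = 1 \<or> j = 3) then 1 else 0)"
| "g (Suc k) r d j = (if d = 0 then
      (if j = 1 \<or> j = 3 then (if r = 0 then 0 else g k (r - 1) 0 2) + 2 * g k r 1 3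
       else (if r = 0 then 0 else g k (r - 1) 0 1) + 2 * g k r 1 2)
    else if j = 1 then (if r = 0 then 0 else g k (r - 1) d 2) + g k r (d - 1) 1 + g k r d 2
    else if j = 4 then (if r = 0 then 0 else g k (r - 1) d 3) + g k r (d - 1) 4 + g k r d 3
    else if j = 2 then (if r = 0 then 0 else g k (r - 1) d 1) + 2 * g k r (Suc d) 2
    else (if r = 0 then 0 else g k (r - 1) d 4) + 2 * g k r (Suc d) 3)"

definition gi :: "nat \<Rightarrow> nat \<Rightarrow> nat \<Rightarrow> nat \<Rightarrow> nat" where
  "gi k r d j = (if r = 0 then 0 else g k (r - 1) d j)"

lemma g_Suc: "g (Suc k) r d j = (if d = 0 then
      (if j = 1 \<or> j = 3 then gi k r 0 2 + 2 * g k r 1 3 else gi k r 0 1 + 2 * g k r 1 2)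
    else if j = 1 then gi k r d 2 + g k r (d - 1) 1 + g k r d 2
    else if j = 4 then gi k r d 3 + g k r (d - 1) 4 + g k r d 3
    else if j = 2 then gi k r d 1 + 2 * g k r (Suc d) 2
    else gi k r d 4 + 2 * g k r (Suc d) 3)"
  unfolding gi_def by simp

lemma sum3: "distinct [a,b,c] \<Longrightarrow> (\<Sum>w\<in>{a,b,c}. f w) = f a + f b + (f c :: nat)"
  by simp

definition T :: "nat \<Rightarrow> oedge \<Rightarrow> oedge \<Rightarrow> nat \<Rightarrow> nat list \<Rightarrow> nat" where
  "T k A B r w = (if w = snd B then (if r = 0 then 0 else cnt k A (w, fst B) (r - 1)) else cnt k A (w, fst B) r)"

lemma cnt_Suc_T: "is_oedge B \<Longrightarrow> cnt (Suc k) A B r = (\<Sum>w\<in>nbr (fst B). T k A B r w)"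
  unfolding T_def by (rule cnt_Suc)

lemma T_inv:
  assumes "\<And>r'. cnt k A (snd B, fst B) r' = g k r' d j"
  shows "T k A B r (snd B) = gi k r d j"
  using assms unfolding T_def gi_def by simp

lemma T_oth:
  assumes "w \<noteq> snd B" "cnt k A (w, fst B) r = x"
  shows "T k A B r w = x"
  using assms unfolding T_def by simp

lemma oedge_nbr: "w \<in> nbr v \<Longrightarrow> is_oedge (w, v)"
  unfolding nbr_def is_oedge_def by simp

lemma nbr_bv: "w \<in> nbr v \<Longrightarrow> bvert v"
  unfolding nbr_def badj_def by simp

locale stp =
  fixes k :: nat and A :: oedge
  assumes A: "is_oedge A"
  and IH: "\<And>C r' d' j'. pair_type j' d' A C \<Longrightarrow> cnt k A C r' = g k r' d' j'"
begin

lemma pt_w: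
  assumes w: "w \<in> nbr v" and ne: "{fst A, snd A} \<noteq> {w, v}"
    and c: "d' = Suc (min (dl A w) (dl A v))"
    "(j' = 1 \<and> sg A w \<and> dl A w < dl A v) \<or> (j' = 2 \<and> sg A w \<and> dl A v < dl A w) \<or>
     (j' = 3 \<and> \<not> sg A w \<and> dl A v < dl A w) \<or> (j' = 4 \<and> \<not> sg A w \<and> dl A w < dl A v)"
  shows "cnt k A (w, v) r' = g k r' d' j'"
proof -
  have "pair_type j' d' A (w, v)" using pt_gen[OF A oedge_nbr[OF w]] ne c by simp
  then show ?thesis using IH by blast
qed

lemma step_A: "cnt (Suc k) A A r = gi k r 0 2 + 2 * g k r 1 3"
proof -
  obtain x y where h: "distinct [snd A,x,y]" "nbr (fst A) = {snd A,x,y}" "dl A x = 1" "dl A y = 1" "\<not> sg A x" "\<not> sg A y"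
    using nbA_fst[OF A] by blast
  have e: "dl A (fst A) = 0" using ends[OF A] by simp
  have neq: "fst A \<noteq> snd A" using oedge_neq[OF A] .
  have xA: "x \<noteq> fst A" "y \<noteq> fst A" using h(3,4) e by auto
  have t1: "T k A A r (snd A) = gi k r 0 2"
  proof (rule T_inv)
    fix r'
    have "(snd A, fst A) = rev_edge A" unfolding rev_edge_def by simp
    then show "cnt k A (snd A, fst A) r' = g k r' 0 2" using IH pt_revA[OF A] by simp
  qed
  have xn: "x \<in> nbr (fst A)" "y \<in> nbr (fst A)" using h(2) by auto
  have t2: "T k A A r x = g k r 1 3"
    by (rule T_oth) (use h(1) pt_w[OF xn(1)] neq xA h e in auto)
  have t3: "T k A A r y = g k r 1 3"
    by (rule T_oth) (use h(1) pt_w[OF xn(2)] neq xA h e in auto)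
  show ?thesis unfolding cnt_Suc_T[OF A] h(2) sum3[OF h(1)] t1 t2 t3 by simp
qed


lemma step_revA: "cnt (Suc k) A (rev_edge A) r = gi k r 0 1 + 2 * g k r 1 2"
proof -
  obtain x y where h: "distinct [fst A,x,y]" "nbr (snd A) = {fst A,x,y}" "dl A x = 1" "dl A y = 1" "sg A x" "sg A y"
    using nbA_snd[OF A] by blast
  have e: "dl A (snd A) = 0" using ends[OF A] by simp
  have neq: "fst A \<noteq> snd A" using oedge_neq[OF A] .
  have xA: "x \<noteq> snd A" "y \<noteq> snd A" using h(3,4) e by auto
  have rv: "fst (rev_edge A) = snd A" "snd (rev_edge A) = fst A" unfolding rev_edge_def by simp_all
  have t1: "T k A (rev_edge A) r (fst A) = gi k r 0 1"
  proof -
    have "T k A (rev_edge A) r (snd (rev_edge A)) = gi k r 0 1"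
    proof (rule T_inv)
      fix r'
      have "(snd (rev_edge A), fst (rev_edge A)) = A" unfolding rev_edge_def by simp
      then show "cnt k A (snd (rev_edge A), fst (rev_edge A)) r' = g k r' 0 1" using IH pt_A[OF A] by simp
    qed
    then show ?thesis using rv by simp
  qed
  have xn: "x \<in> nbr (snd A)" "y \<in> nbr (snd A)" using h(2) by auto
  have t2: "T k A (rev_edge A) r x = g k r 1 2"
    by (rule T_oth) (use h(1) pt_w[OF xn(1)] neq xA h e rv in auto)
  have t3: "T k A (rev_edge A) r y = g k r 1 2"
    by (rule T_oth) (use h(1) pt_w[OF xn(2)] neq xA h e rv in auto)
  show ?thesis unfolding cnt_Suc_T[OF is_oedge_rev[OF A]] rv h(2) sum3[OF h(1)] t1 t2 t3 by simp
qed

lemma pick2: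
  assumes "distinct [w0,x,y]" "b \<in> {w0,x,y}" "b \<noteq> w0"
    "P x" "P y"
  shows "\<exists>y'. distinct [w0,b,y'] \<and> {w0,x,y} = {w0,b,y'} \<and> P b \<and> P y'"
proof -
  have "b = x \<or> b = y" using assms(2,3) by auto
  then show ?thesis
  proof
    assume "b = x" then show ?thesis using assms by (intro exI[of _ y]) auto
  next
    assume "b = y" then show ?thesis using assms by (intro exI[of _ x]) auto
  qed
qed

lemma step_away_gen:
  assumes B: "is_oedge B" and v: "fst B \<noteq> fst A" "fst B \<noteq> snd A"
    and lt: "dl A (fst B) < dl A (snd B)"
  shows "cnt (Suc k) A B r = gi k r (Suc (dl A (fst B))) (if sg A (fst B) then 2 else 3)
     + g k r (dl A (fst B)) (if sg A (fst B) then 1 else 4) + g k r (Suc (dl A (fst B))) (if sg A (fst B) then 2 else 3)"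
proof -
  let ?b0 = "fst B" and ?b1 = "snd B"
  have bv: "bvert ?b0" using oedge_bv[OF B] by simp
  obtain w0 x y where h: "distinct [w0,x,y]" "nbr ?b0 = {w0,x,y}" "dl A w0 + 1 = dl A ?b0"
    "dl A x = dl A ?b0 + 1" "dl A y = dl A ?b0 + 1" "sg A w0 = sg A ?b0" "sg A x = sg A ?b0" "sg A y = sg A ?b0"
    using nbA_gen[OF A bv v] by blast
  have b1n: "?b1 \<in> nbr ?b0" using B badj_sym[of "snd B" "fst B"] unfolding is_oedge_def nbr_def by simp
  have "?b1 \<noteq> w0" using lt h(3) by auto
  then obtain y' where h2: "distinct [w0,?b1,y']" "{w0,x,y} = {w0,?b1,y'}"
     "dl A ?b1 = dl A ?b0 + 1 \<and> sg A ?b1 = sg A ?b0" "dl A y' = dl A ?b0 + 1 \<and> sg A y' = sg A ?b0"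
    using pick2[of w0 x y ?b1 "\<lambda>z. dl A z = dl A ?b0 + 1 \<and> sg A z = sg A ?b0"] h b1n by auto
  have nb: "nbr ?b0 = {w0,?b1,y'}" using h(2) h2(2) by simp
  have ne: "{fst A, snd A} \<noteq> {z, ?b0}" for z using v by auto
  have w0n: "w0 \<in> nbr ?b0" "y' \<in> nbr ?b0" using nb by auto
  have t1: "T k A B r w0 = g k r (dl A ?b0) (if sg A ?b0 then 1 else 4)"
    by (rule T_oth) (use h2(1) pt_w[OF w0n(1) ne] h in auto)
  have t2: "T k A B r ?b1 = gi k r (Suc (dl A ?b0)) (if sg A ?b0 then 2 else 3)"
    by (rule T_inv) (use pt_w[OF b1n ne] h2(3) in auto)
  have t3: "T k A B r y' = g k r (Suc (dl A ?b0)) (if sg A ?b0 then 2 else 3)"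
    by (rule T_oth) (use h2(1) pt_w[OF w0n(2) ne] h2(4) in auto)
  show ?thesis unfolding cnt_Suc_T[OF B] nb sum3[OF h2(1)] t1 t2 t3 by simp
qed

lemma step_away_snd:
  assumes B: "is_oedge B" and v: "fst B = snd A" and ne0: "snd B \<noteq> fst A"
  shows "cnt (Suc k) A B r = gi k r 1 2 + g k r 0 1 + g k r 1 2"
proof -
  obtain x y where h: "distinct [fst A,x,y]" "nbr (snd A) = {fst A,x,y}" "dl A x = 1" "dl A y = 1" "sg A x" "sg A y"
    using nbA_snd[OF A] by blast
  have e: "dl A (snd A) = 0" using ends[OF A] by simp
  have neq: "fst A \<noteq> snd A" using oedge_neq[OF A] .
  have b1n: "snd B \<in> nbr (snd A)" using B badj_sym[of "snd B" "fst B"] v unfolding is_oedge_def nbr_def by simp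
  obtain y' where h2: "distinct [fst A,snd B,y']" "{fst A,x,y} = {fst A,snd B,y'}"
     "dl A (snd B) = 1 \<and> sg A (snd B)" "dl A y' = 1 \<and> sg A y'"
    using pick2[of "fst A" x y "snd B" "\<lambda>z. dl A z = 1 \<and> sg A z"] h b1n ne0 by auto
  have nb: "nbr (snd A) = {fst A,snd B,y'}" using h(2) h2(2) by simp
  have yA: "snd B \<noteq> snd A" "y' \<noteq> snd A" using h2(3,4) e by auto
  have yn: "y' \<in> nbr (snd A)" using nb by auto
  have t1: "T k A B r (fst A) = g k r 0 1"
  proof (rule T_oth)
    show "fst A \<noteq> snd B" using ne0 by simp
    have "(fst A, fst B) = A" using v by simp
    then show "cnt k A (fst A, fst B) r = g k r 0 1" using IH pt_A[OF A] by simp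
  qed
  have t2: "T k A B r (snd B) = gi k r 1 2"
    by (rule T_inv) (use pt_w[OF b1n] h2(3) neq yA e ne0 v in auto)
  have t3: "T k A B r y' = g k r 1 2"
    by (rule T_oth) (use h2(1) pt_w[OF yn] h2(4) neq yA e v in auto)
  show ?thesis unfolding cnt_Suc_T[OF B] v nb sum3[OF h2(1)] t1 t2 t3 by simp
qed

lemma step_away_fst:
  assumes B: "is_oedge B" and v: "fst B = fst A" and ne0: "snd B \<noteq> snd A"
  shows "cnt (Suc k) A B r = gi k r 1 3 + g k r 0 4 + g k r 1 3"
proof -
  obtain x y where h: "distinct [snd A,x,y]" "nbr (fst A) = {snd A,x,y}" "dl A x = 1" "dl A y = 1" "\<not> sg A x" "\<not> sg A y"
    using nbA_fst[OF A] by blast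
  have e: "dl A (fst A) = 0" using ends[OF A] by simp
  have neq: "fst A \<noteq> snd A" using oedge_neq[OF A] .
  have b1n: "snd B \<in> nbr (fst A)" using B badj_sym[of "snd B" "fst B"] v unfolding is_oedge_def nbr_def by simp
  obtain y' where h2: "distinct [snd A,snd B,y']" "{snd A,x,y} = {snd A,snd B,y'}"
     "dl A (snd B) = 1 \<and> \<not> sg A (snd B)" "dl A y' = 1 \<and> \<not> sg A y'"
    using pick2[of "snd A" x y "snd B" "\<lambda>z. dl A z = 1 \<and> \<not> sg A z"] h b1n ne0 by auto
  have nb: "nbr (fst A) = {snd A,snd B,y'}" using h(2) h2(2) by simp
  have yA: "snd B \<noteq> fst A" "y' \<noteq> fst A" using h2(3,4) e by auto
  have yn: "y' \<in> nbr (fst A)" using nb by auto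
  have t1: "T k A B r (snd A) = g k r 0 4"
  proof (rule T_oth)
    show "snd A \<noteq> snd B" using ne0 by simp
    have "(snd A, fst B) = rev_edge A" using v unfolding rev_edge_def by simp
    then show "cnt k A (snd A, fst B) r = g k r 0 4" using IH pt_revA[OF A] by simp
  qed
  have t2: "T k A B r (snd B) = gi k r 1 3"
    by (rule T_inv) (use pt_w[OF b1n] h2(3) neq yA e ne0 v in auto)
  have t3: "T k A B r y' = g k r 1 3"
    by (rule T_oth) (use h2(1) pt_w[OF yn] h2(4) neq yA e v in auto)
  show ?thesis unfolding cnt_Suc_T[OF B] v nb sum3[OF h2(1)] t1 t2 t3 by simp
qed

lemma step_toward:
  assumes B: "is_oedge B" and lt: "dl A (snd B) < dl A (fst B)"
  shows "cnt (Suc k) A B r = gi k r (dl A (fst B)) (if sg A (fst B) then 1 else 4)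
     + 2 * g k r (Suc (dl A (fst B))) (if sg A (fst B) then 2 else 3)"
proof -
  let ?b0 = "fst B" and ?b1 = "snd B"
  have bv: "bvert ?b0" using oedge_bv[OF B] by simp
  have v: "?b0 \<noteq> fst A" "?b0 \<noteq> snd A" using lt ends[OF A] by auto
  obtain w0 x y where h: "distinct [w0,x,y]" "nbr ?b0 = {w0,x,y}" "dl A w0 + 1 = dl A ?b0"
    "dl A x = dl A ?b0 + 1" "dl A y = dl A ?b0 + 1" "sg A w0 = sg A ?b0" "sg A x = sg A ?b0" "sg A y = sg A ?b0"
    using nbA_gen[OF A bv v] by blast
  have b1n: "?b1 \<in> nbr ?b0" using B badj_sym[of "snd B" "fst B"] unfolding is_oedge_def nbr_def by simp
  have "?b1 \<noteq> x" "?b1 \<noteq> y" using lt h(4,5) by auto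
  then have bw: "?b1 = w0" using b1n h(2) by auto
  have ne: "{fst A, snd A} \<noteq> {z, ?b0}" for z using v by auto
  have xn: "x \<in> nbr ?b0" "y \<in> nbr ?b0" using h(2) by auto
  have t1: "T k A B r w0 = gi k r (dl A ?b0) (if sg A ?b0 then 1 else 4)"
    unfolding bw[symmetric] by (rule T_inv) (use pt_w[OF b1n ne] h bw in auto)
  have t2: "T k A B r x = g k r (Suc (dl A ?b0)) (if sg A ?b0 then 2 else 3)"
    by (rule T_oth) (use h(1) bw pt_w[OF xn(1) ne] h in auto)
  have t3: "T k A B r y = g k r (Suc (dl A ?b0)) (if sg A ?b0 then 2 else 3)"
    by (rule T_oth) (use h(1) bw pt_w[OF xn(2) ne] h in auto)
  show ?thesis unfolding cnt_Suc_T[OF B] h(2) sum3[OF h(1)] t1 t2 t3 by simp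
qed
end


lemma same_set:
  assumes A: "is_oedge A" and B: "is_oedge B" and eq: "{fst A, snd A} = {fst B, snd B}"
  shows "B = A \<or> B = rev_edge A"
proof -
  have "(fst A = fst B \<and> snd A = snd B) \<or> (fst A = snd B \<and> snd A = fst B)"
    using eq doubleton_eq_iff by metis
  then show ?thesis unfolding rev_edge_def by (cases A, cases B) auto
qed

lemma inv0: "inversions 0 cs = 0"
  unfolding inversions_def by simp

theorem cnt_g:
  assumes A: "is_oedge A"
  shows "pair_type j d A B \<Longrightarrow> cnt k A B r = g k r d j"
proof (induction k arbitrary: B r d j)
  case 0
  have set: "{cs. is_path 0 A B cs \<and> inversions 0 cs = r} = (if B = A \<and> r = 0 then {[A]} else {})"
    using path0 A inv0 by auto
  show ?case
  proof (cases "B = A")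
    case True
    then have "d = 0 \<and> (j = 1 \<or> j = 3)" using pt_A[OF A] 0 by simp
    then show ?thesis unfolding cnt_def set using True by simp
  next
    case False
    have "\<not> (d = 0 \<and> (j = 1 \<or> j = 3))"
    proof
      assume "d = 0 \<and> (j = 1 \<or> j = 3)"
      then have "B = A" using 0 unfolding pair_type_def by auto
      then show False using False by simp
    qed
    then show ?thesis unfolding cnt_def set using False by auto
  qed
next
  case (Suc k)
  interpret stp k A using A Suc.IH by unfold_locales auto
  have B: "is_oedge B" using Suc.prems unfolding pair_type_def by simp
  show ?case
  proof (cases "{fst A, snd A} = {fst B, snd B}")
    case True
    then have "B = A \<or> B = rev_edge A" using same_set A B by blast
    then show ?thesis
    proof
      assume BA: "B = A"
      then have "d = 0 \<and> (j = 1 \<or> j = 3)" using pt_A[OF A] Suc.prems by simp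
      then show ?thesis using BA step_A by (simp add: g_Suc del: g.simps)
    next
      assume BA: "B = rev_edge A"
      then have "d = 0 \<and> (j = 2 \<or> j = 4)" using pt_revA[OF A] Suc.prems by simp
      then show ?thesis using BA step_revA by (auto simp add: g_Suc simp del: g.simps)
    qed
  next
    case False
    note pt = pt_gen[OF A B False, of j d]
    have h: "d = Suc (min (dl A (fst B)) (dl A (snd B)))"
      "(j = 1 \<and> sg A (fst B) \<and> dl A (fst B) < dl A (snd B)) \<or>
       (j = 2 \<and> sg A (fst B) \<and> dl A (snd B) < dl A (fst B)) \<or>
       (j = 3 \<and> \<not> sg A (fst B) \<and> dl A (snd B) < dl A (fst B)) \<or>
       (j = 4 \<and> \<not> sg A (fst B) \<and> dl A (fst B) < dl A (snd B))"
      using pt Suc.prems by auto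
    have ep: "dl A (snd B) = dl A (fst B) + 1 \<or> dl A (fst B) = dl A (snd B) + 1"
      using edge_props[OF A B False] by simp
    consider "dl A (fst B) < dl A (snd B)" | "dl A (snd B) < dl A (fst B)" using ep by linarith
    then show ?thesis
    proof cases
      case 1
      then have d: "d = Suc (dl A (fst B))" using h(1) by simp
      have j: "j = (if sg A (fst B) then 1 else 4)" using h(2) 1 by auto
      consider "fst B = snd A" | "fst B = fst A" | "fst B \<noteq> fst A \<and> fst B \<noteq> snd A" by blast
      then show ?thesis
      proof cases
        case a: 1
        have "snd B \<noteq> fst A" using False a by auto
        moreover have "sg A (fst B)" "dl A (fst B) = 0" using a ends[OF A] by auto
        ultimately show ?thesis using step_away_snd[OF B a] d j by (simp add: g_Suc del: g.simps)
      next
        case a: 2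
        have "snd B \<noteq> snd A" using False a by auto
        moreover have "\<not> sg A (fst B)" "dl A (fst B) = 0" using a ends[OF A] by auto
        ultimately show ?thesis using step_away_fst[OF B a] d j by (simp add: g_Suc del: g.simps)
      next
        case a: 3
        show ?thesis using step_away_gen[OF B _ _ 1] a d j by (auto simp add: g_Suc simp del: g.simps)
      qed
    next
      case 2
      then have d: "d = dl A (fst B)" using h(1) ep by simp
      have j: "j = (if sg A (fst B) then 2 else 3)" using h(2) 2 by auto
      have "d \<noteq> 0" using d 2 by simp
      then show ?thesis using step_toward[OF B 2] d j by (auto simp add: g_Suc simp del: g.simps)
    qed
  qed
qed

lemma ex_far:
  assumes A: "is_oedge A"
  shows "\<exists>B. is_oedge B \<and> {fst A, snd A} \<noteq> {fst B, snd B} \<and> sg A (fst B) = s \<and> dl A (fst B) = n \<and> dl A (snd B) = Suc n"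
proof (induction n)
  case 0
  show ?case
  proof (cases s)
    case True
    obtain x y where h: "distinct [fst A,x,y]" "nbr (snd A) = {fst A,x,y}" "dl A x = 1" "dl A y = 1" "sg A x" "sg A y"
      using nbA_snd[OF A] by blast
    have xn: "x \<in> nbr (snd A)" using h(2) by auto
    then have ob: "is_oedge (snd A, x)" using badj_sym unfolding nbr_def is_oedge_def by simp
    have "x \<noteq> fst A" "x \<noteq> snd A" using h(1,3) ends[OF A] by auto
    then have "{fst A, snd A} \<noteq> {snd A, x}" by auto
    then show ?thesis using ob ends[OF A] h(3) True by (intro exI[of _ "(snd A, x)"]) simp
  next
    case False
    obtain x y where h: "distinct [snd A,x,y]" "nbr (fst A) = {snd A,x,y}" "dl A x = 1" "dl A y = 1" "\<not> sg A x" "\<not> sg A y"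
      using nbA_fst[OF A] by blast
    have xn: "x \<in> nbr (fst A)" using h(2) by auto
    then have ob: "is_oedge (fst A, x)" using badj_sym unfolding nbr_def is_oedge_def by simp
    have "x \<noteq> fst A" "x \<noteq> snd A" using h(1,3) ends[OF A] by auto
    then have "{fst A, snd A} \<noteq> {fst A, x}" by auto
    then show ?thesis using ob ends[OF A] h(3) False by (intro exI[of _ "(fst A, x)"]) simp
  qed
next
  case (Suc n)
  then obtain B where B: "is_oedge B" "{fst A, snd A} \<noteq> {fst B, snd B}" "sg A (fst B) = s"
    "dl A (fst B) = n" "dl A (snd B) = Suc n" by blast
  let ?v = "snd B"
  have bv: "bvert ?v" using oedge_bv[OF B(1)] by simp
  have v: "?v \<noteq> fst A" "?v \<noteq> snd A" using B(5) ends[OF A] by auto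
  obtain w0 x y where h: "distinct [w0,x,y]" "nbr ?v = {w0,x,y}" "dl A w0 + 1 = dl A ?v"
    "dl A x = dl A ?v + 1" "dl A y = dl A ?v + 1" "sg A w0 = sg A ?v" "sg A x = sg A ?v" "sg A y = sg A ?v"
    using nbA_gen[OF A bv v] by blast
  have sv: "sg A ?v = s" using edge_props[OF A B(1) B(2)] B(3) by simp
  have xn: "x \<in> nbr ?v" using h(2) by auto
  then have ob: "is_oedge (?v, x)" using badj_sym unfolding nbr_def is_oedge_def by simp
  have "{fst A, snd A} \<noteq> {?v, x}" using v by auto
  then show ?case using ob sv h(4) B(5) by (intro exI[of _ "(?v, x)"]) simp
qed

lemma ex_oedge: "is_oedge ([1], [])"
  unfolding is_oedge_def badj_def by (simp add: bvert_Cons)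

lemma ex_pt:
  assumes j: "j = 1 \<or> j = 4"
  shows "\<exists>AB. pair_type j d (fst AB) (snd AB)"
proof -
  define A :: oedge where "A = ([1], [])"
  have A: "is_oedge A" unfolding A_def by (rule ex_oedge)
  show ?thesis
  proof (cases d)
    case 0
    show ?thesis
    proof (cases "j = 1")
      case True
      then have "pair_type j d A A" using pt_A[OF A] 0 by simp
      then show ?thesis by (intro exI[of _ "(A, A)"]) simp
    next
      case False
      then have "pair_type j d A (rev_edge A)" using pt_revA[OF A] 0 j by simp
      then show ?thesis by (intro exI[of _ "(A, rev_edge A)"]) simp
    qed
  next
    case (Suc n)
    obtain B where B: "is_oedge B" "{fst A, snd A} \<noteq> {fst B, snd B}" "sg A (fst B) = (j = 1)"
      "dl A (fst B) = n" "dl A (snd B) = Suc n" using ex_far[OF A] by blast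
    have "pair_type j d A B" using pt_gen[OF A B(1) B(2)] B Suc j by auto
    then show ?thesis by (intro exI[of _ "(A, B)"]) simp
  qed
qed

lemma Gamma_g:
  assumes j: "j = 1 \<or> j = 4"
  shows "Gamma k r d j = g k r d j"
proof (cases k)
  case 0
  then show ?thesis unfolding Gamma_def by simp
next
  case (Suc k')
  define AB where "AB = (SOME AB. pair_type j d (fst AB) (snd AB))"
  have pt: "pair_type j d (fst AB) (snd AB)" unfolding AB_def using someI_ex[OF ex_pt[OF j]] .
  then have "is_oedge (fst AB)" unfolding pair_type_def by simp
  then have "cnt k (fst AB) (snd AB) r = g k r d j" using cnt_g pt by blast
  then show ?thesis unfolding Gamma_def cnt_def AB_def[symmetric] using Suc by (simp add: Let_def)
qed

lemma FF_g: "j = 1 \<or> j = 4 \<Longrightarrow> FF j = (\<lambda>k r d. int (g k r d j))"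
  unfolding FF_def using Gamma_g by auto


definition S :: "nat \<Rightarrow> nat \<Rightarrow> nat \<Rightarrow> nat \<Rightarrow> nat" where
  "S j k r n = (\<Sum>p\<le>k. 2 ^ p * g (k - p) r (n + p) j)"

lemma S_0: "S j 0 r n = g 0 r n j"
  unfolding S_def by simp

lemma S_Suc: "S j (Suc k) r n = g (Suc k) r n j + 2 * S j k r (Suc n)"
proof -
  have "S j (Suc k) r n = 2 ^ 0 * g (Suc k - 0) r (n + 0) j + (\<Sum>p\<le>k. 2 ^ Suc p * g (Suc k - Suc p) r (n + Suc p) j)"
    unfolding S_def by (rule sum.atMost_Suc_shift)
  also have "(\<Sum>p\<le>k. 2 ^ Suc p * g (Suc k - Suc p) r (n + Suc p) j) = 2 * S j k r (Suc n)"
    unfolding S_def by (simp add: sum_distrib_left mult.assoc)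
  finally show ?thesis by simp
qed

lemma g2_rec: "g (Suc k) r d 2 = gi k r d 1 + 2 * g k r (Suc d) 2"
  unfolding gi_def by (cases d) (simp_all add: g.simps)

lemma g3_rec: "d \<noteq> 0 \<Longrightarrow> g (Suc k) r d 3 = gi k r d 4 + 2 * g k r (Suc d) 3"
  unfolding gi_def by (simp add: g.simps)

lemma g1_rec: "g (Suc k) r d 1 = (if d = 0 then gi k r 0 2 + 2 * g k r 1 3 else gi k r d 2 + g k r (d - 1) 1 + g k r d 2)"
  unfolding gi_def by (simp add: g.simps)

lemma g4_rec: "g (Suc k) r d 4 = (if d = 0 then gi k r 0 1 + 2 * g k r 1 2 else gi k r d 3 + g k r (d - 1) 4 + g k r d 3)"
  unfolding gi_def by (simp add: g.simps)

lemma g_sym0: "g k r 0 2 = g k r 0 4"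
  by (cases k) (simp_all add: g.simps)

declare g.simps(2)[simp del]

lemma g0: "g 0 r d j = (if r = 0 \<and> d = 0 \<and> (j = 1 \<or> j = 3) then 1 else 0)"
  by simp

lemma L2: "g (Suc k) r d 2 = (if r = 0 then 0 else S 1 k (r - 1) d)"
proof (induction k arbitrary: d)
  case 0
  show ?case unfolding g2_rec gi_def S_0 by simp
next
  case (Suc k)
  show ?case unfolding g2_rec[of "Suc k"] Suc.IH S_Suc gi_def by simp
qed

lemma L3: "d \<noteq> 0 \<Longrightarrow> g (Suc k) r d 3 = (if r = 0 then 0 else S 4 k (r - 1) d)"
proof (induction k arbitrary: d)
  case 0
  then show ?case unfolding g3_rec[OF 0] gi_def S_0 by simp
next
  case (Suc k)
  have "Suc d \<noteq> 0" by simp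
  show ?case unfolding g3_rec[OF Suc.prems, of "Suc k"] Suc.IH[OF \<open>Suc d \<noteq> 0\<close>] S_Suc gi_def by simp
qed

lemma L3_one: "g (Suc k) r 1 3 = (if r = 0 then 0 else S 4 k (r - 1) 1)"
  using L3[of 1 k r] by simp

lemma L4: "g (Suc m) r 0 1 = (if r = 0 then 0 else S 4 m (r - 1) 0)"
proof (cases m)
  case 0
  show ?thesis unfolding 0 g1_rec gi_def S_0 by simp
next
  case (Suc m')
  have "g (Suc m) r 0 1 = gi m r 0 2 + 2 * g m r 1 3" unfolding g1_rec by simp
  also have "\<dots> = (if r = 0 then 0 else g (Suc m') (r - 1) 0 4 + 2 * S 4 m' (r - 1) 1)"
    unfolding Suc gi_def g_sym0 L3_one by simp
  also have "\<dots> = (if r = 0 then 0 else S 4 m (r - 1) 0)"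
    unfolding Suc S_Suc by simp
  finally show ?thesis .
qed

definition f :: "nat \<Rightarrow> ser" where
  "f j = (\<lambda>k r d. int (g k r d j))"

lemma f_app: "f j k r d = int (g k r d j)"
  unfolding f_def by simp

lemma TI_f: "Theta_inv (f j) k r n = int (S j k r n)"
  unfolding Theta_inv_def f_def S_def by simp

lemma M1: "ser_monom 2 2 0 (Theta_inv (f 1)) (Suc k) r d = int (gi k r d 2)"
proof (cases k)
  case 0
  then show ?thesis unfolding ser_monom_def gi_def by simp
next
  case (Suc m)
  show ?thesis unfolding Suc ser_monom_def gi_def TI_f L2
    by (cases r; cases "r - 1") simp_all
qed

lemma M2: "ser_monom 2 1 0 (Theta_inv (f 1)) (Suc k) r d = int (g k r d 2)"
proof (cases k)
  case 0
  then show ?thesis unfolding ser_monom_def by simp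
next
  case (Suc m)
  show ?thesis unfolding Suc ser_monom_def TI_f L2 by (cases r) simp_all
qed

lemma M3: "d \<noteq> 0 \<Longrightarrow> ser_monom 2 2 0 (Theta_inv (f 4)) (Suc k) r d = int (gi k r d 3)"
proof (cases k)
  case 0
  assume "d \<noteq> 0"
  then show ?thesis using 0 unfolding ser_monom_def gi_def by simp
next
  case (Suc m)
  assume d: "d \<noteq> 0"
  show ?thesis unfolding Suc ser_monom_def gi_def TI_f L3[OF d]
    by (cases r; cases "r - 1") (simp_all add: d)
qed

lemma M4: "d \<noteq> 0 \<Longrightarrow> ser_monom 2 1 0 (Theta_inv (f 4)) (Suc k) r d = int (g k r d 3)"
proof (cases k)
  case 0
  assume "d \<noteq> 0"
  then show ?thesis using 0 unfolding ser_monom_def by simp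
next
  case (Suc m)
  assume d: "d \<noteq> 0"
  show ?thesis unfolding Suc ser_monom_def TI_f L3[OF d] by (cases r) (simp_all add: d)
qed

lemma M5: "int (gi k r 0 1) = ser_monom 2 2 0 (Theta_inv (f 4)) (Suc k) r 0 + (if k = 0 \<and> r = 1 then 1 else 0)"
proof (cases k)
  case 0
  then show ?thesis unfolding ser_monom_def gi_def by (cases r) simp_all
next
  case (Suc m)
  show ?thesis unfolding Suc ser_monom_def gi_def TI_f L4
    by (cases r; cases "r - 1") simp_all
qed

lemma Q4: "QQ (f 4) k r d = (if k = 0 \<or> d \<noteq> 0 then 0 else 2 * int (g (k - 1) r 1 3))"
proof (cases k)
  case 0
  then show ?thesis unfolding QQ_def ser_smult_def ser_monom_def by simp
next
  case (Suc k')
  show ?thesis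
  proof (cases k')
    case 0
    then show ?thesis using Suc unfolding QQ_def ser_smult_def ser_monom_def ser_Z0_def by simp
  next
    case (Suc m)
    have "g (Suc m) r 1 3 = (if r = 0 then 0 else S 4 m (r - 1) 1)" using L3[of 1] by simp
    then show ?thesis using Suc \<open>k = Suc k'\<close> unfolding QQ_def ser_smult_def ser_monom_def ser_Z0_def ser_derivZ_def TI_f
      by (cases r) simp_all
  qed
qed

lemma Q1: "QQ (f 1) k r d = (if k = 0 \<or> d \<noteq> 0 then 0 else 2 * int (g (k - 1) r 1 2))"
proof (cases k)
  case 0
  then show ?thesis unfolding QQ_def ser_smult_def ser_monom_def by simp
next
  case (Suc k')
  show ?thesis
  proof (cases k')
    case 0
    then show ?thesis using Suc unfolding QQ_def ser_smult_def ser_monom_def ser_Z0_def by simp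
  next
    case (Suc m)
    show ?thesis unfolding \<open>k = Suc k'\<close> Suc QQ_def ser_smult_def ser_monom_def ser_Z0_def ser_derivZ_def TI_f
      by (cases r) (simp_all add: L2)
  qed
qed

lemma target1: "ser_sub (PP (f 1)) (QQ (f 4)) = ser_one"
proof (intro ext)
  fix k r d
  show "ser_sub (PP (f 1)) (QQ (f 4)) k r d = ser_one k r d"
  proof (cases k)
    case 0
    then show ?thesis unfolding ser_sub_def PP_def ser_add_def ser_monom_def ser_one_def Q4 f_app
      by simp
  next
    case (Suc k')
    have z: "ser_monom 2 1 0 (ser_Z0 (Theta_inv (f 1))) (Suc k') r d = (if d = 0 then ser_monom 2 1 0 (Theta_inv (f 1)) (Suc k') r 0 else 0)"
      unfolding ser_monom_def ser_Z0_def by simp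
    have x: "ser_monom 1 0 1 (f 1) (Suc k') r d = (if d = 0 then 0 else int (g k' r (d - 1) 1))"
      unfolding ser_monom_def f_app by simp
    have m: "ser_sub (PP (f 1)) (QQ (f 4)) (Suc k') r d = int (g (Suc k') r d 1) - ser_monom 1 0 1 (f 1) (Suc k') r d
       - ser_monom 2 2 0 (Theta_inv (f 1)) (Suc k') r d - ser_monom 2 1 0 (Theta_inv (f 1)) (Suc k') r d
       + ser_monom 2 1 0 (ser_Z0 (Theta_inv (f 1))) (Suc k') r d - QQ (f 4) (Suc k') r d"
      unfolding ser_sub_def PP_def ser_add_def by (simp add: f_app)
    show ?thesis unfolding Suc m z x unfolding M1 M2 Q4 g1_rec
      by (simp add: ser_one_def gi_def)
  qed
qed

lemma target2: "ser_add (ser_neg (QQ (f 1))) (PP (f 4)) = ser_monom 1 1 0 ser_one"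
proof (intro ext)
  fix k r d
  show "ser_add (ser_neg (QQ (f 1))) (PP (f 4)) k r d = ser_monom 1 1 0 ser_one k r d"
  proof (cases k)
    case 0
    then show ?thesis unfolding ser_neg_def PP_def ser_add_def ser_sub_def ser_monom_def ser_one_def Q1 f_app
      by simp
  next
    case kS: (Suc k')
    have x: "ser_monom 1 0 1 (f 4) (Suc k') r d = (if d = 0 then 0 else int (g k' r (d - 1) 4))"
      unfolding ser_monom_def f_app by simp
    have m: "ser_add (ser_neg (QQ (f 1))) (PP (f 4)) (Suc k') r d = - QQ (f 1) (Suc k') r d + (int (g (Suc k') r d 4) - ser_monom 1 0 1 (f 4) (Suc k') r d
       - ser_monom 2 2 0 (Theta_inv (f 4)) (Suc k') r d - ser_monom 2 1 0 (Theta_inv (f 4)) (Suc k') r d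
       + ser_monom 2 1 0 (ser_Z0 (Theta_inv (f 4))) (Suc k') r d)"
      unfolding ser_sub_def PP_def ser_add_def ser_neg_def by (simp add: f_app)
    have rhs: "ser_monom 1 1 0 ser_one (Suc k') r d = (if k' = 0 \<and> r = 1 \<and> d = 0 then 1 else 0)"
      unfolding ser_monom_def ser_one_def by auto
    show ?thesis
    proof (cases d)
      case 0
      have z: "ser_monom 2 1 0 (ser_Z0 (Theta_inv (f 4))) (Suc k') r 0 = ser_monom 2 1 0 (Theta_inv (f 4)) (Suc k') r 0"
        unfolding ser_monom_def ser_Z0_def by simp
      show ?thesis unfolding kS m rhs x unfolding 0 z Q1 g4_rec using M5[of k' r]
        by (simp)
    next
      case (Suc d')
      have z: "ser_monom 2 1 0 (ser_Z0 (Theta_inv (f 4))) (Suc k') r d = 0"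
        unfolding ser_monom_def ser_Z0_def using Suc by simp
      have dn: "d \<noteq> 0" using Suc by simp
      show ?thesis unfolding kS m rhs z x unfolding Q1 g4_rec M3[OF dn] M4[OF dn] using dn
        by (simp add: gi_def)
    qed
  qed
qed

theorem lemma4:
  shows "ser_sub (PP (FF 1)) (QQ (FF 4)) = ser_one \<and>
         ser_add (ser_neg (QQ (FF 1))) (PP (FF 4)) = ser_monom 1 1 0 ser_one"
proof -
  have e1: "FF 1 = f 1" using FF_g[of 1] unfolding f_def by simp
  have e4: "FF 4 = f 4" using FF_g[of 4] unfolding f_def by simp
  show ?thesis unfolding e1 e4 using target1 target2 by simp
qed

end
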